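(* Let $n\ge2$, $A=(a_{jk})\in\mathbb{R}^{n\times n}$, $\sigma_1,\dots,\sigma_n>0$, and let $X(t)$ be the stochastic replicator dynamics on $\Delta$ with pay-off matrix $A$ and noise coefficients $\sigma_j$ (see context). Let $k$ be a strict Nash equilibrium and suppose that $$a_{kk}>a_{jk}+\sigma_k^2\quad\text{for all }j\ne k.$$ Then $\mathbf{e}_k$ is asymptotically stochastically stable: for any neighborhood $U$ of $\mathbf{e}_k$ and any $\varepsilon>0$ there is a neighborhood $V$ of $\mathbf{e}_k$ such that $$P_{\mathbf{x}}\Big\{X(t)\in U\text{ for all }t\ge0,\ \lim_{t\to\infty}X(t)=\mathbf{e}_k\Big\}\ge1-\varepsilon$$ for every initial state $\mathbf{x}\in V\cap\Delta$.
   Context: $\Delta=\{\mathbf{y}\in(0,1)^n:\sum y_j=1\}$, $\overline\Delta$ its closure; $\mathbf{e}_k$ the $k$th unit vector, identified with pure strategy $k$. The stochastic replicator dynamics is the solution $X(t)\in\Delta$ of $dX(t)=\mathbf{b}(X(t))dt+C(X(t))dW(t)$, with $W$ an $n$-dimensional standard Brownian motion, $\mathbf{b}(\mathbf{x})=[\mathrm{diag}(x_1,\dots,x_n)-\mathbf{x}\mathbf{x}^T][A-\mathrm{diag}(\sigma_1^2,\dots,\sigma_n^2)]\mathbf{x}$, $C(\mathbf{x})=[\mathrm{diag}(x_1,\dots,x_n)-\mathbf{x}\mathbf{x}^T]\mathrm{diag}(\sigma_1,\dots,\sigma_n)$; $P_{\mathbf{x}}$ is the law of the process with $X(0)=\mathbf{x}$.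 A strategy $\mathbf{p}\in\overline\Delta$ is a strict Nash equilibrium if $\mathbf{p}^TA\mathbf{p}>\mathbf{q}^TA\mathbf{p}$ for all $\mathbf{q}\in\overline\Delta$, $\mathbf{q}\ne\mathbf{p}$; for a pure strategy $k$ this means $a_{kk}>a_{jk}$ for all $j\ne k$. *)

theory Defs
  imports "HOL-Probability.Probability"
begin

definition open_simplex :: "(real^'n) set" where
  "open_simplex = {y. (\<forall>j. 0 < y$j) \<and> (\<Sum>j\<in>UNIV. y$j) = 1}"

definition strict_nash :: "real^'n^'n \<Rightarrow> real^'n \<Rightarrow> bool" where
  "strict_nash A p \<longleftrightarrow> p \<in> closure open_simplex \<and>
     (\<forall>q \<in> closure open_simplex. q \<noteq> p \<longrightarrow> p \<bullet> (A *v p) > q \<bullet> (A *v p))"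

definition vdiag :: "real^'n \<Rightarrow> real^'n^'n" where
  "vdiag v = (\<chi> i j. if i = j then v$i else 0)"

definition outer :: "real^'n \<Rightarrow> real^'n^'n" where
  "outer x = (\<chi> i j. x$i * x$j)"

definition rep_drift :: "real^'n^'n \<Rightarrow> real^'n \<Rightarrow> real^'n \<Rightarrow> real^'n" where
  "rep_drift A \<sigma> x =
     (vdiag x - outer x) *v ((A - vdiag (\<chi> j. (\<sigma>$j)^2)) *v x)"

definition rep_diff :: "real^'n \<Rightarrow> real^'n \<Rightarrow> real^'n^'n" where
  "rep_diff \<sigma> x = (vdiag x - outer x) ** vdiag \<sigma>"

definition C2_with :: "(real^'n \<Rightarrow> real) \<Rightarrow> (real^'n \<Rightarrow> real^'n) \<Rightarrow> (real^'n \<Rightarrow> real^'n^'n) \<Rightarrow> bool" where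
  "C2_with f g H \<longleftrightarrow>
     (\<forall>y. (f has_derivative (\<lambda>h. g y \<bullet> h)) (at y)) \<and>
     (\<forall>y. (g has_derivative (\<lambda>h. H y *v h)) (at y)) \<and>
     continuous_on UNIV H"

definition rep_gen :: "real^'n^'n \<Rightarrow> real^'n \<Rightarrow> (real^'n \<Rightarrow> real^'n) \<Rightarrow> (real^'n \<Rightarrow> real^'n^'n) \<Rightarrow> real^'n \<Rightarrow> real" where
  "rep_gen A \<sigma> g H y =
     g y \<bullet> rep_drift A \<sigma> y +
     (1/2) * (\<Sum>i\<in>UNIV. \<Sum>j\<in>UNIV. (rep_diff \<sigma> y ** transpose (rep_diff \<sigma> y))$i$j * H y $i$j)"

definition nat_filtration :: "'w measure \<Rightarrow> (real \<Rightarrow> 'w \<Rightarrow> real^'n) \<Rightarrow> real \<Rightarrow> 'w set set" where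
  "nat_filtration M X s =
     sigma_sets (space M) (\<Union>r\<in>{0..s}. {X r -` B \<inter> space M | B. B \<in> sets borel})"

definition is_martingale :: "'w measure \<Rightarrow> (real \<Rightarrow> 'w set set) \<Rightarrow> (real \<Rightarrow> 'w \<Rightarrow> real) \<Rightarrow> bool" where
  "is_martingale M F Y \<longleftrightarrow>
     (\<forall>t\<ge>0. (\<forall>B \<in> sets borel. Y t -` B \<inter> space M \<in> F t) \<and> integrable M (Y t)) \<and>
     (\<forall>s t. 0 \<le> s \<longrightarrow> s \<le> t \<longrightarrow>
        (\<forall>E \<in> F s. (\<integral>\<omega>. indicator E \<omega> * Y t \<omega> \<partial>M) = (\<integral>\<omega>. indicator E \<omega> * Y s \<omega> \<partial>M)))"

text \<open>A process X on the probability space M with X(0) = x is a solution of the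
  stochastic replicator dynamics if it has continuous paths in the open_simplex and solves
  the martingale problem for the generator of the SDE (Stroock--Varadhan).\<close>
definition replicator_solution ::
  "real^'n^'n \<Rightarrow> real^'n \<Rightarrow> real^'n \<Rightarrow> 'w measure \<Rightarrow> (real \<Rightarrow> 'w \<Rightarrow> real^'n) \<Rightarrow> bool" where
  "replicator_solution A \<sigma> x M X \<longleftrightarrow>
     prob_space M \<and>
     (\<forall>t\<ge>0. X t \<in> borel_measurable M) \<and>
     (\<forall>\<omega>\<in>space M. X 0 \<omega> = x \<and> continuous_on {0..} (\<lambda>t. X t \<omega>) \<and>
                   (\<forall>t\<ge>0. X t \<omega> \<in> open_simplex)) \<and>
     (\<forall>f g H. C2_with f g H \<longrightarrow>
        is_martingale M (nat_filtration M X)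
          (\<lambda>t \<omega>. f (X t \<omega>) - f x - integral {0..t} (\<lambda>s. rep_gen A \<sigma> g H (X s \<omega>))))"

end

theory Submission
  imports Defs
begin

definition pp :: "nat \<Rightarrow> real \<Rightarrow> real" where "pp n u = (max 0 u) ^ n"

lemma pp_cont: "continuous_on S (pp n)"
  unfolding pp_def by (intro continuous_intros)

lemma pp_deriv:
  assumes "n \<ge> 1"
  shows "(pp (Suc n) has_real_derivative (real (Suc n) * pp n x)) (at x)"
proof (cases "x < 0")
  case True
  have ev: "\<forall>\<^sub>F y in nhds x. pp (Suc n) y = (\<lambda>y. 0) y"
    using eventually_nhds_in_open[of "{..<0}" x] True
    by (auto elim!: eventually_mono simp: pp_def)
  have "((\<lambda>y. 0) has_real_derivative 0) (at x)" by simp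
  then show ?thesis using True assms
    by (subst DERIV_cong_ev[OF refl ev]) (auto simp: pp_def zero_power)
next
  case False
  show ?thesis
  proof (cases "x > 0")
    case True
    have ev: "\<forall>\<^sub>F y in nhds x. pp (Suc n) y = (\<lambda>y. y ^ Suc n) y"
      using eventually_nhds_in_open[of "{0<..}" x] True
      by (auto elim!: eventually_mono simp: pp_def)
    have "((\<lambda>y. y ^ Suc n) has_real_derivative (real (Suc n) * x ^ n)) (at x)"
      by (rule derivative_eq_intros refl | simp)+
    then show ?thesis using True
      by (subst DERIV_cong_ev[OF refl ev]) (auto simp: pp_def)
  next
    case False
    with \<open>\<not> x < 0\<close> have x0: "x = 0" by simp
    have "((\<lambda>y. (pp (Suc n) y - pp (Suc n) 0) / (y - 0)) \<longlongrightarrow> 0) (at 0)"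
    proof (rule Lim_null_comparison)
      show "\<forall>\<^sub>F y in at 0. norm ((pp (Suc n) y - pp (Suc n) 0) / (y - 0)) \<le> \<bar>y\<bar> ^ n"
      proof (rule always_eventually, rule allI)
        fix y :: real
        show "norm ((pp (Suc n) y - pp (Suc n) 0) / (y - 0)) \<le> \<bar>y\<bar> ^ n"
        proof (cases "y > 0")
          case True thus ?thesis by (simp add: pp_def max_def)
        next
          case False thus ?thesis by (simp add: pp_def max_def)
        qed
      qed
      have "((\<lambda>y::real. \<bar>y\<bar> ^ n) \<longlongrightarrow> \<bar>0\<bar> ^ n) (at 0)"
        by (intro tendsto_intros)
      moreover have "\<bar>0::real\<bar> ^ n = 0" using assms by (simp add: zero_power)
      ultimately show "((\<lambda>y::real. \<bar>y\<bar> ^ n) \<longlongrightarrow> 0) (at 0)" by metis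
    qed
    moreover have "real (Suc n) * pp n 0 = 0" using assms by (simp add: pp_def zero_power)
    ultimately show ?thesis using x0
      by (simp add: has_field_derivative_iff)
  qed
qed

definition hc :: "real \<Rightarrow> real \<Rightarrow> real \<Rightarrow> real" where
  "hc a b v = v - (1/(6*((b-a)/2)^2)) * (pp 3 (v-a) - 2 * pp 3 (v-(a+b)/2) + pp 3 (v-b))"
definition hc1 :: "real \<Rightarrow> real \<Rightarrow> real \<Rightarrow> real" where
  "hc1 a b v = 1 - (1/(2*((b-a)/2)^2)) * (pp 2 (v-a) - 2 * pp 2 (v-(a+b)/2) + pp 2 (v-b))"
definition hc2 :: "real \<Rightarrow> real \<Rightarrow> real \<Rightarrow> real" where
  "hc2 a b v = - (1/(((b-a)/2)^2)) * (pp 1 (v-a) - 2 * pp 1 (v-(a+b)/2) + pp 1 (v-b))"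

lemma pp_deriv_comp:
  assumes "n \<ge> 1"
  shows "((\<lambda>v. pp (Suc n) (v - c)) has_real_derivative (real (Suc n) * pp n (v - c))) (at v)"
proof -
  have g: "((\<lambda>v. v - c) has_real_derivative 1) (at v)" by (auto intro!: derivative_eq_intros)
  show ?thesis using DERIV_chain2[where g="\<lambda>v. v - c" and x=v, OF pp_deriv[OF assms] g] by simp
qed

lemma pp3_deriv: "((\<lambda>v. pp 3 (v - c)) has_real_derivative (3 * pp 2 (v - c))) (at v)"
  using pp_deriv_comp[of 2 c v] by (simp add: eval_nat_numeral)
lemma pp2_deriv: "((\<lambda>v. pp 2 (v - c)) has_real_derivative (2 * pp 1 (v - c))) (at v)"
  using pp_deriv_comp[of 1 c v] by (simp add: eval_nat_numeral)

lemma hc_deriv: "(hc a b has_real_derivative hc1 a b v) (at v)"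
proof -
  have "(hc a b has_real_derivative
     1 - (1/(6*((b-a)/2)^2)) * (3 * pp 2 (v-a) - 2 * (3 * pp 2 (v-(a+b)/2)) + 3 * pp 2 (v-b))) (at v)"
    unfolding hc_def
    by (intro DERIV_diff DERIV_add DERIV_cmult pp3_deriv DERIV_ident)
  moreover have "1 - (1/(6*((b-a)/2)^2)) * (3 * pp 2 (v-a) - 2 * (3 * pp 2 (v-(a+b)/2)) + 3 * pp 2 (v-b)) = hc1 a b v"
    unfolding hc1_def by (simp add: right_diff_distrib distrib_left)
  ultimately show ?thesis by simp
qed

lemma hc1_deriv: "(hc1 a b has_real_derivative hc2 a b v) (at v)"
proof -
  have "(hc1 a b has_real_derivative
     0 - (1/(2*((b-a)/2)^2)) * (2 * pp 1 (v-a) - 2 * (2 * pp 1 (v-(a+b)/2)) + 2 * pp 1 (v-b))) (at v)"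
    unfolding hc1_def
    by (intro DERIV_diff DERIV_add DERIV_cmult pp2_deriv DERIV_const)
  moreover have "0 - (1/(2*((b-a)/2)^2)) * (2 * pp 1 (v-a) - 2 * (2 * pp 1 (v-(a+b)/2)) + 2 * pp 1 (v-b)) = hc2 a b v"
    unfolding hc2_def by (simp add: right_diff_distrib distrib_left)
  ultimately show ?thesis by simp
qed

lemma hc2_cont: "continuous_on S (hc2 a b)"
  unfolding hc2_def pp_def by (intro continuous_intros)

lemma hc1_cont: "continuous_on S (hc1 a b)"
  unfolding hc1_def pp_def by (intro continuous_intros)

lemma hc_cont: "continuous_on S (hc a b)"
  unfolding hc_def pp_def by (intro continuous_intros)

lemma hc_low: assumes "a < b" "v \<le> a"
  shows "hc a b v = v" "hc1 a b v = 1" "hc2 a b v = 0"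
  using assms by (auto simp: hc_def hc1_def hc2_def pp_def max_def)

lemma hc_high: assumes "a < b" "b \<le> v"
  shows "hc1 a b v = 0" "hc2 a b v = 0"
proof -
  have mx: "max 0 (v-a) = v-a" "max 0 (v-(a+b)/2) = v - (a+b)/2" "max 0 (v-b) = v-b"
    using assms by auto
  have "(v - a)\<^sup>2 - 2 * (v - (a + b) / 2)\<^sup>2 + (v - b)\<^sup>2 = 2 * ((b-a)/2)^2"
    by (simp add: power2_eq_square field_simps)
  then show "hc1 a b v = 0" using assms
    unfolding hc1_def pp_def mx by simp
  have "(v - a) - 2 * (v - (a + b) / 2) + (v - b) = 0" by (simp add: field_simps)
  then show "hc2 a b v = 0" unfolding hc2_def pp_def mx by simp
qed

lemma hc2_nonpos: assumes "a < b" shows "hc2 a b v \<le> 0"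
proof -
  have "pp 1 (v-a) - 2 * pp 1 (v-(a+b)/2) + pp 1 (v-b) \<ge> 0"
    using assms unfolding pp_def power_one_right max_def by (auto simp: field_simps)
  then show ?thesis unfolding hc2_def by (simp add: mult_nonneg_nonneg)
qed

lemma hc1_bounds: assumes "a < b" shows "0 \<le> hc1 a b v" "hc1 a b v \<le> 1"
proof -
  define d where "d = (b-a)/2"
  have d: "d > 0" using assms by (simp add: d_def)
  define u where "u = v - a"
  have m: "v - (a+b)/2 = u - d" "v - b = u - 2*d" by (simp_all add: u_def d_def field_simps)
  define Q where "Q = pp 2 u - 2 * pp 2 (u-d) + pp 2 (u - 2*d)"
  have Q: "0 \<le> Q \<and> Q \<le> 2 * d^2"
  proof (cases "u \<le> 0")
    case True then show ?thesis using d by (simp add: Q_def pp_def max_def)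
  next
    case u: False
    show ?thesis
    proof (cases "u \<le> d")
      case True
      have "u^2 \<le> d^2" using True u by (intro power_mono) auto
      moreover have "max 0 (u - d) = 0" "max 0 (u - 2*d) = 0" "max 0 u = u" using True u d by auto
      ultimately have "Q = u^2" unfolding Q_def pp_def by simp
      then show ?thesis using \<open>u^2 \<le> d^2\<close> zero_le_power2[of d] zero_le_power2[of u] by linarith
    next
      case ud: False
      show ?thesis
      proof (cases "u \<le> 2*d")
        case True
        have e: "u^2 - 2*(u-d)^2 = 2*d^2 - (2*d - u)^2" by (simp add: power2_eq_square algebra_simps)
        have "(2*d - u)^2 \<le> d^2" using True ud d by (intro power_mono) auto
        moreover have "max 0 (u - d) = u - d" "max 0 (u - 2*d) = 0" "max 0 u = u" using True u ud d by auto
        ultimately have "Q = 2*d^2 - (2*d - u)^2" "(2*d - u)^2 \<le> d^2" using e unfolding Q_def pp_def by simp_all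
        then show ?thesis using zero_le_power2[of d] zero_le_power2[of "2*d-u"] by linarith
      next
        case False
        have "u^2 - 2*(u-d)^2 + (u-2*d)^2 = 2*d^2" by (simp add: power2_eq_square algebra_simps)
        then show ?thesis using False u ud d by (simp add: Q_def pp_def max_def)
      qed
    qed
  qed
  have h: "hc1 a b v = 1 - Q / (2*d^2)" unfolding hc1_def Q_def d_def[symmetric] m u_def[symmetric] by simp
  show "0 \<le> hc1 a b v" using Q d by (simp add: h field_simps)
  show "hc1 a b v \<le> 1" using Q d by (simp add: h field_simps)
qed

lemma hc_mono: assumes "a < b" "v \<le> w" shows "hc a b v \<le> hc a b w"
proof (rule DERIV_nonneg_imp_nondecreasing[OF assms(2)])
  fix x show "\<exists>y. (hc a b has_real_derivative y) (at x) \<and> 0 \<le> y"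
    using hc_deriv[of a b x] hc1_bounds[OF assms(1), of x] by blast
qed

lemma hc_le: assumes "a < b" shows "hc a b v \<le> v"
proof (cases "v \<le> a")
  case True then show ?thesis using hc_low[OF assms] by simp
next
  case False
  have "hc a b v - v \<le> hc a b a - a"
  proof (rule DERIV_nonpos_imp_nonincreasing[of a v "\<lambda>v. hc a b v - v"])
    show "a \<le> v" using False by simp
    fix x
    have "((\<lambda>v. hc a b v - v) has_real_derivative hc1 a b x - 1) (at x)"
      by (intro DERIV_diff hc_deriv DERIV_ident)
    then show "\<exists>y. ((\<lambda>v. hc a b v - v) has_real_derivative y) (at x) \<and> y \<le> 0"
      using hc1_bounds[OF assms, of x] by (intro exI[of _ "hc1 a b x - 1"]) auto
  qed
  then show ?thesis using hc_low[OF assms order_refl] by simp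
qed

lemma hc_ge: assumes "a < b" "a \<le> v" shows "a \<le> hc a b v"
  using hc_mono[OF assms(1) assms(2)] hc_low[OF assms(1) order_refl] by simp


definition Ff :: "real \<Rightarrow> real \<Rightarrow> 'n \<Rightarrow> real^'n \<Rightarrow> real" where
  "Ff a b k y = hc a b (1 - y$k)"
definition Gf :: "real \<Rightarrow> real \<Rightarrow> 'n \<Rightarrow> real^'n \<Rightarrow> real^'n" where
  "Gf a b k y = (- hc1 a b (1 - y$k)) *\<^sub>R axis k 1"
definition Hf :: "real \<Rightarrow> real \<Rightarrow> 'n \<Rightarrow> real^'n \<Rightarrow> real^'n^'n" where
  "Hf a b k y = (\<chi> i j. if i = k \<and> j = k then hc2 a b (1 - y$k) else 0)"

lemma lin_k: "((\<lambda>y::real^'n. 1 - y$k) has_derivative (\<lambda>h. - h$k)) (at y)"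
proof -
  have "((\<lambda>y::real^'n. y$k) has_derivative (\<lambda>h. h$k)) (at y)"
    using bounded_linear_vec_nth by (rule bounded_linear_imp_has_derivative)
  then show ?thesis by (intro derivative_eq_intros) auto
qed

lemma C2_Ff: fixes k :: "'n::finite" shows "C2_with (Ff a b k) (Gf a b k) (Hf a b k)"
  unfolding C2_with_def
proof (intro conjI allI)
  fix y :: "real^'n"
  have "((\<lambda>y. hc a b (1 - y$k)) has_derivative (\<lambda>h. - h$k * hc1 a b (1 - y$k))) (at y)"
    by (rule DERIV_compose_FDERIV[OF hc_deriv lin_k])
  moreover have "(\<lambda>h. - h$k * hc1 a b (1 - y$k)) = (\<lambda>h. Gf a b k y \<bullet> h)"
    by (auto simp: Gf_def inner_axis' mult.commute)
  ultimately show "(Ff a b k has_derivative (\<lambda>h. Gf a b k y \<bullet> h)) (at y)"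
    unfolding Ff_def by simp
  have "((\<lambda>y. hc1 a b (1 - y$k)) has_derivative (\<lambda>h. - h$k * hc2 a b (1 - y$k))) (at y)"
    by (rule DERIV_compose_FDERIV[OF hc1_deriv lin_k])
  then have "((\<lambda>y. (- hc1 a b (1 - y$k)) *\<^sub>R (axis k 1 :: real^'n)) has_derivative
      (\<lambda>h. (- (- h$k * hc2 a b (1 - y$k))) *\<^sub>R axis k 1)) (at y)"
    by (intro derivative_intros)
  moreover have "(\<lambda>h. (- (- h$k * hc2 a b (1 - y$k))) *\<^sub>R (axis k 1 :: real^'n)) = (\<lambda>h. Hf a b k y *v h)"
  proof (rule ext)
    fix h :: "real^'n"
    show "(- (- h$k * hc2 a b (1 - y$k))) *\<^sub>R (axis k 1 :: real^'n) = Hf a b k y *v h"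
    proof (subst vec_eq_iff, intro allI)
      fix i
      show "((- (- h$k * hc2 a b (1 - y$k))) *\<^sub>R (axis k 1 :: real^'n)) $ i = (Hf a b k y *v h) $ i"
        by (cases "i = k") (simp_all add: Hf_def matrix_vector_mult_def axis_def if_distrib[of "\<lambda>x. x * _"] sum.delta cong: if_cong)
    qed
  qed
  ultimately show "(Gf a b k has_derivative (\<lambda>h. Hf a b k y *v h)) (at y)"
    unfolding Gf_def by simp
next
  show "continuous_on UNIV (Hf a b k)"
  proof -
    have c: "continuous_on UNIV (\<lambda>x::real^'n. hc2 a b (1 - x $ k))"
      by (rule continuous_on_compose2[OF hc2_cont[of UNIV]]) (auto intro!: continuous_intros)
    show ?thesis unfolding Hf_def
    proof (intro continuous_on_vec_lambda)
      fix i j show "continuous_on UNIV (\<lambda>x::real^'n. if i = k \<and> j = k then hc2 a b (1 - x $ k) else 0)"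
      proof (cases "i = k \<and> j = k")
        case True then show ?thesis using c by simp
      next
        case False
        then have "(\<lambda>x::real^'n. if i = k \<and> j = k then hc2 a b (1 - x $ k) else 0) = (\<lambda>x. 0)" by auto
        then show ?thesis by (metis continuous_on_const)
      qed
    qed
  qed
qed


definition Atil :: "real^'n^'n \<Rightarrow> real^'n \<Rightarrow> real^'n^'n" where
  "Atil A \<sigma> = A - vdiag (\<chi> j. (\<sigma>$j)^2)"

definition dk :: "real^'n^'n \<Rightarrow> real^'n \<Rightarrow> 'n \<Rightarrow> real^'n \<Rightarrow> real" where
  "dk A \<sigma> k y = y$k * ((\<Sum>i\<in>UNIV. Atil A \<sigma> $k$i * y$i) - (\<Sum>j\<in>UNIV. y$j * (\<Sum>i\<in>UNIV. Atil A \<sigma> $j$i * y$i)))"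

definition Gam :: "real^'n \<Rightarrow> 'n \<Rightarrow> real^'n \<Rightarrow> real" where
  "Gam \<sigma> k y = (\<Sum>j\<in>UNIV. (((if k = j then y$k else 0) - y$k * y$j) * \<sigma>$j)^2)"

lemma drift_k: "(rep_drift A \<sigma> y)$k = dk A \<sigma> k y"
proof -
  have "(rep_drift A \<sigma> y)$k = (\<Sum>j\<in>UNIV. ((if k = j then y$k else 0) - y$k * y$j) * (\<Sum>i\<in>UNIV. Atil A \<sigma> $j$i * y$i))"
    by (simp add: rep_drift_def matrix_vector_mult_def vdiag_def outer_def Atil_def)
  also have "\<dots> = (\<Sum>j\<in>UNIV. (if k = j then y$k else 0) * (\<Sum>i\<in>UNIV. Atil A \<sigma> $j$i * y$i))
      - (\<Sum>j\<in>UNIV. y$k * y$j * (\<Sum>i\<in>UNIV. Atil A \<sigma> $j$i * y$i))"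
    by (simp add: left_diff_distrib sum_subtractf)
  also have "(\<Sum>j\<in>UNIV. (if k = j then y$k else 0) * (\<Sum>i\<in>UNIV. Atil A \<sigma> $j$i * y$i))
     = y$k * (\<Sum>i\<in>UNIV. Atil A \<sigma> $k$i * y$i)"
    by (simp only: if_distrib[of "\<lambda>x. x * _"] mult_zero_left sum.delta' finite UNIV_I if_True)
  also have "y$k * (\<Sum>i\<in>UNIV. Atil A \<sigma> $k$i * y$i) - (\<Sum>j\<in>UNIV. y$k * y$j * (\<Sum>i\<in>UNIV. Atil A \<sigma> $j$i * y$i))
     = dk A \<sigma> k y"
    by (simp add: dk_def right_diff_distrib sum_distrib_left mult.assoc)
  finally show ?thesis .
qed

lemma gam_k: "(rep_diff \<sigma> y ** transpose (rep_diff \<sigma> y))$k$k = Gam \<sigma> k y"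
proof -
  have r: "rep_diff \<sigma> y $ i $ j = ((if i = j then y$i else 0) - y$i * y$j) * \<sigma>$j" for i j
    by (simp add: rep_diff_def matrix_matrix_mult_def vdiag_def outer_def if_distrib[of "\<lambda>x. _ * x"] sum.delta cong: if_cong)
  show ?thesis
    by (simp add: matrix_matrix_mult_def transpose_def r Gam_def power2_eq_square)
qed

lemma Gam_nonneg: "Gam \<sigma> k y \<ge> 0"
  unfolding Gam_def by (intro sum_nonneg) auto

lemma rep_gen_Ff: "rep_gen A \<sigma> (Gf a b k) (Hf a b k) y =
   - hc1 a b (1 - y$k) * dk A \<sigma> k y + 1/2 * Gam \<sigma> k y * hc2 a b (1 - y$k)"
proof -
  have "(\<Sum>i\<in>UNIV. \<Sum>j\<in>UNIV. (rep_diff \<sigma> y ** transpose (rep_diff \<sigma> y))$i$j * Hf a b k y $i$j)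
     = (rep_diff \<sigma> y ** transpose (rep_diff \<sigma> y))$k$k * hc2 a b (1 - y$k)"
  proof -
    have e: "\<And>P Q x. (if P \<and> Q then x else (0::real)) = (if Q then (if P then x else 0) else 0)" by auto
    show ?thesis
      by (simp only: Hf_def vec_lambda_beta if_distrib[of "\<lambda>x. _ * x"] mult_zero_right e sum.delta finite UNIV_I if_True)
  qed
  then show ?thesis
    by (simp add: rep_gen_def Gf_def inner_axis' drift_k gam_k inner_commute)
qed

lemma dk_cont: "continuous_on S (dk A \<sigma> k)"
  unfolding dk_def by (intro continuous_intros)

lemma Gam_cont: "continuous_on S (Gam \<sigma> k)"
proof -
  have "Gam \<sigma> k = (\<lambda>y. \<Sum>j\<in>UNIV. ((if k = j then 1 else 0) * y$k - y$k * y$j) * \<sigma>$j * (((if k = j then 1 else 0) * y$k - y$k * y$j) * \<sigma>$j))"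
    by (auto simp: Gam_def power2_eq_square fun_eq_iff intro!: sum.cong)
  then show ?thesis by (simp; intro continuous_intros)
qed

lemma Lf_cont: "continuous_on S (\<lambda>y. - hc1 a b (1 - y$k) * dk A \<sigma> k y + 1/2 * Gam \<sigma> k y * hc2 a b (1 - y$k))"
  by (intro continuous_intros dk_cont Gam_cont continuous_on_compose2[OF hc1_cont[of UNIV]]
       continuous_on_compose2[OF hc2_cont[of UNIV]]) auto


lemma simplex_facts:
  fixes y :: "real^'n"
  assumes "y \<in> open_simplex"
  shows "\<And>j. 0 < y$j" "(\<Sum>j\<in>UNIV. y$j) = 1" "\<And>j. j \<noteq> k \<Longrightarrow> y$j \<le> 1 - y$k"
    "\<And>j. \<bar>y$j - (if j = k then 1 else 0)\<bar> \<le> 1 - y$k" "y$k \<le> 1"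
proof -
  show p: "\<And>j. 0 < y$j" "(\<Sum>j\<in>UNIV. y$j) = 1" using assms by (auto simp: open_simplex_def)
  have s: "(\<Sum>j\<in>UNIV. y$j) = y$k + (\<Sum>j\<in>UNIV-{k}. y$j)"
    by (simp add: sum.remove[of UNIV k])
  show le: "\<And>j. j \<noteq> k \<Longrightarrow> y$j \<le> 1 - y$k"
  proof -
    fix j assume "j \<noteq> k"
    have "y$j \<le> (\<Sum>j\<in>UNIV-{k}. y$j)"
      using \<open>j \<noteq> k\<close> p(1) by (intro member_le_sum) (auto intro: less_imp_le)
    then show "y$j \<le> 1 - y$k" using s p(2) by simp
  qed
  have "0 \<le> (\<Sum>j\<in>UNIV-{k}. y$j)" using p(1) by (intro sum_nonneg) (auto intro: less_imp_le)
  then show "y$k \<le> 1" using s p(2) by simp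
  then show "\<And>j. \<bar>y$j - (if j = k then 1 else 0)\<bar> \<le> 1 - y$k"
  proof -
    fix j show "\<bar>y$j - (if j = k then 1 else 0)\<bar> \<le> 1 - y$k"
    proof (cases "j = k")
      case True then show ?thesis using \<open>y$k \<le> 1\<close> by simp
    next
      case False then show ?thesis using le[OF False] p(1)[of j] by simp
    qed
  qed
qed

lemma drift_lb:
  fixes A :: "real^'n^'n" and \<sigma> :: "real^'n" and k :: 'n
  assumes hyp: "\<forall>j. j \<noteq> k \<longrightarrow> A$k$k > A$j$k + (\<sigma>$k)^2"
  shows "\<exists>\<beta> c. \<beta> > 0 \<and> c > 0 \<and> (\<forall>y\<in>open_simplex. 1 - y$k < \<beta> \<longrightarrow> dk A \<sigma> k y \<ge> c * (1 - y$k))"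
proof -
  define B where "B = Atil A \<sigma>"
  have Bkk: "B$k$k - B$i$k = A$k$k - (\<sigma>$k)^2 - A$i$k" if "i \<noteq> k" for i
    using that by (simp add: B_def Atil_def vdiag_def)
  define \<gamma> where "\<gamma> = Min (insert 1 ((\<lambda>i. B$k$k - B$i$k) ` (UNIV - {k})))"
  have \<gamma>pos: "\<gamma> > 0" unfolding \<gamma>_def
    using hyp Bkk by (subst Min_gr_iff) auto
  have \<gamma>le: "\<gamma> \<le> B$k$k - B$i$k" if "i \<noteq> k" for i
    unfolding \<gamma>_def using that by (intro Min_le) auto
  define K where "K = (\<Sum>i\<in>UNIV. \<Sum>j\<in>UNIV. \<bar>B$i$j\<bar>)"
  have K0: "K \<ge> 0" unfolding K_def by (intro sum_nonneg) auto
  have Ki: "(\<Sum>j\<in>UNIV. \<bar>B$i$j\<bar>) \<le> K" for i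
    unfolding K_def by (rule member_le_sum[of i UNIV "\<lambda>i. \<Sum>j\<in>UNIV. \<bar>B$i$j\<bar>"]) (auto intro: sum_nonneg)
  define \<beta> where "\<beta> = min (1/2) (\<gamma> / (4*K+1))"
  have \<beta>pos: "\<beta> > 0" using \<gamma>pos K0 by (simp add: \<beta>_def)
  show ?thesis
  proof (intro exI conjI ballI impI)
    show "\<beta> > 0" by (fact \<beta>pos)
    show "\<gamma>/4 > 0" using \<gamma>pos by simp
    fix y :: "real^'n" assume y: "y \<in> open_simplex" and sb: "1 - y$k < \<beta>"
    define s where "s = 1 - y$k"
    note sf = simplex_facts[OF y]
    have s0: "s \<ge> 0" using sf(5)[of k] by (simp add: s_def)
    define w where "w i = (\<Sum>l\<in>UNIV. B$i$l * y$l)" for i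
    have wdev: "\<bar>w i - B$i$k\<bar> \<le> K * s" for i
    proof -
      have "w i - B$i$k = (\<Sum>l\<in>UNIV. B$i$l * (y$l - (if l = k then 1 else 0)))"
        by (simp add: w_def right_diff_distrib sum_subtractf if_distrib[of "\<lambda>x. _ * x"] sum.delta cong: if_cong)
      also have "\<bar>\<dots>\<bar> \<le> (\<Sum>l\<in>UNIV. \<bar>B$i$l\<bar> * s)"
        by (rule order_trans[OF sum_abs]) (auto intro!: sum_mono mult_left_mono simp: abs_mult s_def sf(4))
      also have "\<dots> \<le> K * s" using Ki[of i] s0 by (simp add: sum_distrib_right[symmetric] mult_right_mono)
      finally show ?thesis .
    qed
    have sK: "K * s \<le> \<gamma>/4"
    proof -
      have "s \<le> \<gamma> / (4*K+1)" using sb by (simp add: s_def \<beta>_def)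
      then have "s * (4*K+1) \<le> \<gamma>" using K0 by (simp add: field_simps)
      then have "4 * K * s + s \<le> \<gamma>" by (simp add: algebra_simps)
      then show ?thesis using s0 by (simp add: algebra_simps)
    qed
    have gap: "w k - w j \<ge> \<gamma>/2" if "j \<noteq> k" for j
      using wdev[of k] wdev[of j] \<gamma>le[OF that] sK unfolding abs_le_iff by linarith
    have "w k - (\<Sum>j\<in>UNIV. y$j * w j) = (\<Sum>j\<in>UNIV. y$j * (w k - w j))"
      using sf(2) by (simp add: right_diff_distrib sum_subtractf sum_distrib_right[symmetric])
    also have "\<dots> \<ge> (\<Sum>j\<in>UNIV. (\<gamma>/2) * (y$j - (if j = k then y$j else 0)))"
    proof (rule sum_mono)
      fix j show "(\<gamma>/2) * (y$j - (if j = k then y$j else 0)) \<le> y$j * (w k - w j)"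
        using gap[of j] sf(1)[of j] by (cases "j = k") (auto simp: mult.commute intro: mult_left_mono)
    qed
    moreover have "(\<Sum>j\<in>UNIV. (\<gamma>/2) * (y$j - (if j = k then y$j else 0))) = (\<gamma>/2) * s"
    proof -
      have "(\<Sum>j\<in>UNIV. (y$j - (if j = k then y$j else 0))) = s"
        using sf(2) by (simp add: sum_subtractf sum.delta s_def)
      then show ?thesis by (simp only: sum_distrib_left[symmetric])
    qed
    ultimately have inner: "w k - (\<Sum>j\<in>UNIV. y$j * w j) \<ge> (\<gamma>/2) * s" by simp
    have yk: "y$k \<ge> 1/2" using sb by (simp add: \<beta>_def)
    have "dk A \<sigma> k y = y$k * (w k - (\<Sum>j\<in>UNIV. y$j * w j))"
      by (simp add: dk_def w_def B_def)
    also have "\<dots> \<ge> (1/2) * ((\<gamma>/2) * s)"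
      using inner yk \<gamma>pos s0 by (intro mult_mono) auto
    finally show "dk A \<sigma> k y \<ge> \<gamma>/4 * (1 - y$k)" by (simp add: s_def)
  qed
qed


locale rsol =
  fixes A :: "real^'n^'n" and \<sigma> :: "real^'n" and x :: "real^'n" and M :: "'w measure"
    and X :: "real \<Rightarrow> 'w \<Rightarrow> real^'n"
  assumes sol: "replicator_solution A \<sigma> x M X"
begin

lemma ps: "prob_space M" using sol by (simp add: replicator_solution_def)

sublocale prob_space M by (rule ps)

lemma measX: "t \<ge> 0 \<Longrightarrow> X t \<in> borel_measurable M"
  using sol by (simp add: replicator_solution_def)

lemma X0: "\<omega> \<in> space M \<Longrightarrow> X 0 \<omega> = x"
  using sol by (simp add: replicator_solution_def)

lemma Xcont: "\<omega> \<in> space M \<Longrightarrow> continuous_on {0..} (\<lambda>t. X t \<omega>)"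
  using sol by (simp add: replicator_solution_def)

lemma Xsimp: "\<omega> \<in> space M \<Longrightarrow> t \<ge> 0 \<Longrightarrow> X t \<omega> \<in> open_simplex"
  using sol by (simp add: replicator_solution_def)

lemma mart: "C2_with f g H \<Longrightarrow> is_martingale M (nat_filtration M X)
          (\<lambda>t \<omega>. f (X t \<omega>) - f x - integral {0..t} (\<lambda>s. rep_gen A \<sigma> g H (X s \<omega>)))"
  using sol by (simp add: replicator_solution_def)

abbreviation F where "F \<equiv> nat_filtration M X"

lemma F_gen_sub: "(\<Union>r\<in>{0..s}. {X r -` B \<inter> space M | B. B \<in> sets borel}) \<subseteq> sets M"
  using measX by (auto simp: measurable_def)

lemma F_sub: "F s \<subseteq> sets M"
  unfolding nat_filtration_def by (rule sets.sigma_sets_subset[OF F_gen_sub])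

lemma F_sigma: "sigma_algebra (space M) (F s)"
  unfolding nat_filtration_def by (rule sigma_algebra_sigma_sets) auto

lemma F_mono: "s \<le> t \<Longrightarrow> F s \<subseteq> F t"
  unfolding nat_filtration_def by (intro sigma_sets_mono' UN_mono) auto

lemma F_gen: "0 \<le> r \<Longrightarrow> r \<le> s \<Longrightarrow> B \<in> sets borel \<Longrightarrow> X r -` B \<inter> space M \<in> F s"
  unfolding nat_filtration_def by (rule sigma_sets.Basic, rule UN_I[of r]) auto

 lemma F_less:
  fixes f :: "real^'n \<Rightarrow> real"
  assumes "continuous_on UNIV f" "0 \<le> r" "r \<le> s"
  shows "{\<omega>\<in>space M. f (X r \<omega>) < c} \<in> F s" "{\<omega>\<in>space M. f (X r \<omega>) \<ge> c} \<in> F s"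
proof -
  have o: "open {y. f y < c}" using open_vimage[OF open_lessThan assms(1), of c] by (simp add: vimage_def)
  have "{\<omega>\<in>space M. f (X r \<omega>) < c} = X r -` {y. f y < c} \<inter> space M" by auto
  then show "{\<omega>\<in>space M. f (X r \<omega>) < c} \<in> F s" using F_gen[OF assms(2,3), of "{y. f y < c}"] o by simp
  have cl: "closed {y. f y \<ge> c}" using closed_vimage[OF closed_atLeast assms(1), of c] by (simp add: vimage_def)
  have "{\<omega>\<in>space M. f (X r \<omega>) \<ge> c} = X r -` {y. f y \<ge> c} \<inter> space M" by auto
  then show "{\<omega>\<in>space M. f (X r \<omega>) \<ge> c} \<in> F s" using F_gen[OF assms(2,3), of "{y. f y \<ge> c}"] cl by simp
qed

lemma fX_meas: "continuous_on UNIV f \<Longrightarrow> t \<ge> 0 \<Longrightarrow> (\<lambda>\<omega>. f (X t \<omega>)) \<in> borel_measurable M"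
  by (rule borel_measurable_continuous_on[OF _ measX])

lemma fX_int:
  assumes "continuous_on UNIV (f :: real^'n \<Rightarrow> real)" "t \<ge> 0" "\<And>y. y \<in> open_simplex \<Longrightarrow> \<bar>f y\<bar> \<le> Bf"
  shows "integrable M (\<lambda>\<omega>. f (X t \<omega>))"
  by (rule integrable_const_bound[where B=Bf]) (use assms Xsimp fX_meas in auto)

lemma path_int:
  assumes "continuous_on UNIV (L :: real^'n \<Rightarrow> real)" "\<omega> \<in> space M"
  shows "(\<lambda>r. L (X r \<omega>)) integrable_on {0..t}"
proof (rule integrable_continuous_interval)
  show "continuous_on {0..t} (\<lambda>r. L (X r \<omega>))"
    by (rule continuous_on_compose2[OF assms(1) continuous_on_subset[OF Xcont[OF assms(2)]]]) auto
qed

lemma I_mono: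
  assumes "continuous_on UNIV (L :: real^'n \<Rightarrow> real)" "\<And>y. y \<in> open_simplex \<Longrightarrow> L y \<le> 0"
    "\<omega> \<in> space M" "0 \<le> s" "s \<le> t"
  shows "integral {0..t} (\<lambda>r. L (X r \<omega>)) \<le> integral {0..s} (\<lambda>r. L (X r \<omega>))"
proof -
  have "integral {0..s} (\<lambda>r. L (X r \<omega>)) + integral {s..t} (\<lambda>r. L (X r \<omega>)) = integral {0..t} (\<lambda>r. L (X r \<omega>))"
    by (rule Henstock_Kurzweil_Integration.integral_combine) (use assms path_int in auto)
  moreover have "integral {s..t} (\<lambda>r. L (X r \<omega>)) \<le> 0"
  proof -
    have "0 \<le> integral {s..t} (\<lambda>r. - L (X r \<omega>))"
    proof (rule Henstock_Kurzweil_Integration.integral_nonneg)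
      show "(\<lambda>r. - L (X r \<omega>)) integrable_on {s..t}"
        by (rule integrable_neg integrable_on_subinterval[OF path_int[OF assms(1,3), of t]])+ (use assms in auto)
      show "\<And>r. r \<in> {s..t} \<Longrightarrow> 0 \<le> - L (X r \<omega>)" using assms Xsimp by auto
    qed
    then show ?thesis by (simp add: integral_neg)
  qed
  ultimately show ?thesis by simp
qed

end


context rsol begin

lemma mart_facts:
  assumes C2: "C2_with f g H"
  defines "Y \<equiv> (\<lambda>t \<omega>. f (X t \<omega>) - f x - integral {0..t} (\<lambda>r. rep_gen A \<sigma> g H (X r \<omega>)))"
  shows "\<And>u. u \<ge> 0 \<Longrightarrow> integrable M (Y u)"
    "\<And>s t E. 0 \<le> s \<Longrightarrow> s \<le> t \<Longrightarrow> E \<in> F s \<Longrightarrow> (\<integral>\<omega>. indicator E \<omega> * Y t \<omega> \<partial>M) = (\<integral>\<omega>. indicator E \<omega> * Y s \<omega> \<partial>M)"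
proof -
  have m: "is_martingale M F Y" using mart[OF C2] unfolding Y_def .
  show "\<And>u. u \<ge> 0 \<Longrightarrow> integrable M (Y u)" using m unfolding is_martingale_def by blast
  show "\<And>s t E. 0 \<le> s \<Longrightarrow> s \<le> t \<Longrightarrow> E \<in> F s \<Longrightarrow> (\<integral>\<omega>. indicator E \<omega> * Y t \<omega> \<partial>M) = (\<integral>\<omega>. indicator E \<omega> * Y s \<omega> \<partial>M)"
    using m unfolding is_martingale_def by blast
qed

lemma int_ind:
  fixes h :: "'w \<Rightarrow> real"
  assumes "E \<in> sets M" "integrable M h"
  shows "integrable M (\<lambda>\<omega>. indicator E \<omega> * h \<omega>)"
  using integrable_real_mult_indicator[OF assms] by (simp add: mult.commute)

lemma supermart:
  fixes f :: "real^'n \<Rightarrow> real"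
  assumes C2: "C2_with f g H" and fc: "continuous_on UNIV f"
    and fb: "\<And>y. y \<in> open_simplex \<Longrightarrow> \<bar>f y\<bar> \<le> Bf"
    and Lc: "continuous_on UNIV (rep_gen A \<sigma> g H)"
    and Ln: "\<And>y. y \<in> open_simplex \<Longrightarrow> rep_gen A \<sigma> g H y \<le> 0"
    and st: "0 \<le> s" "s \<le> t" and E: "E \<in> F s"
  shows "(\<integral>\<omega>. indicator E \<omega> * f (X t \<omega>) \<partial>M) \<le> (\<integral>\<omega>. indicator E \<omega> * f (X s \<omega>) \<partial>M)"
proof -
  define Y where "Y = (\<lambda>t \<omega>. f (X t \<omega>) - f x - integral {0..t} (\<lambda>r. rep_gen A \<sigma> g H (X r \<omega>)))"
  have mY: "is_martingale M F Y" unfolding Y_def by (rule mart[OF C2])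
  have mf1: "integrable M (Y u)" if "u \<ge> 0" for u using mY that unfolding is_martingale_def by blast
  have mf2: "(\<integral>\<omega>. indicator E \<omega> * Y t \<omega> \<partial>M) = (\<integral>\<omega>. indicator E \<omega> * Y s \<omega> \<partial>M)"
    if "0 \<le> s" "s \<le> t" "E \<in> F s" for s t E using mY that unfolding is_martingale_def by blast
  have Es: "E \<in> sets M" using E F_sub by auto
  have i1: "integrable M (\<lambda>\<omega>. indicator E \<omega> * Y t \<omega>)" using int_ind[OF Es mf1] st by auto
  have i2: "integrable M (\<lambda>\<omega>. indicator E \<omega> * Y s \<omega>)" using int_ind[OF Es mf1] st by auto
  have i3: "integrable M (\<lambda>\<omega>. indicator E \<omega> * f (X s \<omega>))" using int_ind[OF Es fX_int[OF fc _ fb]] st by auto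
  have i4: "integrable M (\<lambda>\<omega>. indicator E \<omega> * f (X t \<omega>))" using int_ind[OF Es fX_int[OF fc _ fb]] st by auto
  have "(\<integral>\<omega>. indicator E \<omega> * f (X t \<omega>) \<partial>M) \<le>
      (\<integral>\<omega>. indicator E \<omega> * Y t \<omega> - indicator E \<omega> * Y s \<omega> + indicator E \<omega> * f (X s \<omega>) \<partial>M)"
  proof (rule integral_mono)
    show "integrable M (\<lambda>\<omega>. indicator E \<omega> * Y t \<omega> - indicator E \<omega> * Y s \<omega> + indicator E \<omega> * f (X s \<omega>))"
      using i1 i2 i3 by (intro Bochner_Integration.integrable_add Bochner_Integration.integrable_diff)
    show "integrable M (\<lambda>\<omega>. indicator E \<omega> * f (X t \<omega>))" by (fact i4)
    fix \<omega> assume \<omega>: "\<omega> \<in> space M"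
    have "integral {0..t} (\<lambda>r. rep_gen A \<sigma> g H (X r \<omega>)) \<le> integral {0..s} (\<lambda>r. rep_gen A \<sigma> g H (X r \<omega>))"
      by (rule I_mono[OF Lc Ln \<omega> st])
    then have "f (X t \<omega>) \<le> Y t \<omega> - Y s \<omega> + f (X s \<omega>)" by (simp add: Y_def)
    then show "indicator E \<omega> * f (X t \<omega>) \<le> indicator E \<omega> * Y t \<omega> - indicator E \<omega> * Y s \<omega> + indicator E \<omega> * f (X s \<omega>)"
      by (auto simp: indicator_def)
  qed
  also have "\<dots> = (\<integral>\<omega>. indicator E \<omega> * Y t \<omega> \<partial>M) - (\<integral>\<omega>. indicator E \<omega> * Y s \<omega> \<partial>M) + (\<integral>\<omega>. indicator E \<omega> * f (X s \<omega>) \<partial>M)"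
    using i1 i2 i3 by (simp add: Bochner_Integration.integral_add Bochner_Integration.integral_diff Bochner_Integration.integrable_diff)
  also have "\<dots> = (\<integral>\<omega>. indicator E \<omega> * f (X s \<omega>) \<partial>M)" using mf2[OF st E] by simp
  finally show ?thesis .
qed

lemma EI:
  fixes f :: "real^'n \<Rightarrow> real"
  assumes C2: "C2_with f g H" and fc: "continuous_on UNIV f"
    and fb: "\<And>y. y \<in> open_simplex \<Longrightarrow> \<bar>f y\<bar> \<le> Bf" and t: "t \<ge> 0"
  shows "integrable M (\<lambda>\<omega>. integral {0..t} (\<lambda>r. rep_gen A \<sigma> g H (X r \<omega>)))"
    "(\<integral>\<omega>. integral {0..t} (\<lambda>r. rep_gen A \<sigma> g H (X r \<omega>)) \<partial>M) = (\<integral>\<omega>. f (X t \<omega>) \<partial>M) - f x"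
proof -
  define Y where "Y = (\<lambda>t \<omega>. f (X t \<omega>) - f x - integral {0..t} (\<lambda>r. rep_gen A \<sigma> g H (X r \<omega>)))"
  have mY: "is_martingale M F Y" unfolding Y_def by (rule mart[OF C2])
  have mf1: "integrable M (Y u)" if "u \<ge> 0" for u using mY that unfolding is_martingale_def by blast
  have mf2: "(\<integral>\<omega>. indicator E \<omega> * Y t \<omega> \<partial>M) = (\<integral>\<omega>. indicator E \<omega> * Y s \<omega> \<partial>M)"
    if "0 \<le> s" "s \<le> t" "E \<in> F s" for s t E using mY that unfolding is_martingale_def by blast
  have e: "(\<lambda>\<omega>. integral {0..t} (\<lambda>r. rep_gen A \<sigma> g H (X r \<omega>))) = (\<lambda>\<omega>. f (X t \<omega>) - f x - Y t \<omega>)"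
    by (simp add: Y_def)
  have fi: "integrable M (\<lambda>\<omega>. f (X t \<omega>))" by (rule fX_int[OF fc t fb])
  show "integrable M (\<lambda>\<omega>. integral {0..t} (\<lambda>r. rep_gen A \<sigma> g H (X r \<omega>)))"
    unfolding e using fi mf1[OF t] by (intro Bochner_Integration.integrable_diff integrable_const)
  have top: "space M \<in> F 0" unfolding nat_filtration_def by (rule sigma_sets_top)
  have "(\<integral>\<omega>. indicator (space M) \<omega> * Y t \<omega> \<partial>M) = (\<integral>\<omega>. indicator (space M) \<omega> * Y 0 \<omega> \<partial>M)"
    using mf2[OF order_refl t top] .
  moreover have "(\<integral>\<omega>. indicator (space M) \<omega> * Y t \<omega> \<partial>M) = (\<integral>\<omega>. Y t \<omega> \<partial>M)"
    by (rule Bochner_Integration.integral_cong) auto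
  moreover have "(\<integral>\<omega>. indicator (space M) \<omega> * Y 0 \<omega> \<partial>M) = (\<integral>\<omega>. 0 \<partial>M)"
    by (rule Bochner_Integration.integral_cong) (auto simp: Y_def X0)
  ultimately have EY: "(\<integral>\<omega>. Y t \<omega> \<partial>M) = 0" by simp
  show "(\<integral>\<omega>. integral {0..t} (\<lambda>r. rep_gen A \<sigma> g H (X r \<omega>)) \<partial>M) = (\<integral>\<omega>. f (X t \<omega>) \<partial>M) - f x"
    unfolding e using fi mf1[OF t] EY
    by (simp add: Bochner_Integration.integral_diff Bochner_Integration.integrable_diff prob_space)
qed

end


definition dsuper :: "'w measure \<Rightarrow> (nat \<Rightarrow> 'w set set) \<Rightarrow> (nat \<Rightarrow> 'w \<Rightarrow> real) \<Rightarrow> bool" where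
 "dsuper M G Z \<longleftrightarrow> (\<forall>i. G i \<subseteq> sets M \<and> sigma_algebra (space M) (G i) \<and> G i \<subseteq> G (Suc i) \<and>
    (\<forall>c. {\<omega>\<in>space M. Z i \<omega> < c} \<in> G i) \<and> (\<forall>\<omega>\<in>space M. Z i \<omega> \<ge> 0) \<and> integrable M (Z i) \<and>
    (\<forall>E\<in>G i. (\<integral>\<omega>. indicator E \<omega> * Z (Suc i) \<omega> \<partial>M) \<le> (\<integral>\<omega>. indicator E \<omega> * Z i \<omega> \<partial>M)))"

lemma dsuper_shift: "dsuper M G Z \<Longrightarrow> dsuper M (\<lambda>i. G (Suc i)) (\<lambda>i. Z (Suc i))"
  unfolding dsuper_def by blast

lemma dsuperD:
  assumes "dsuper M G Z"
  shows "G i \<subseteq> sets M" "sigma_algebra (space M) (G i)" "G i \<subseteq> G (Suc i)"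
    "{\<omega>\<in>space M. Z i \<omega> < c} \<in> G i" "\<omega> \<in> space M \<Longrightarrow> Z i \<omega> \<ge> 0" "integrable M (Z i)"
    "E \<in> G i \<Longrightarrow> (\<integral>\<omega>. indicator E \<omega> * Z (Suc i) \<omega> \<partial>M) \<le> (\<integral>\<omega>. indicator E \<omega> * Z i \<omega> \<partial>M)"
  using assms unfolding dsuper_def by blast+

context finite_measure begin

lemma ind_int_ge:
  fixes Z :: "'a \<Rightarrow> real"
  assumes "E \<in> sets M" "integrable M Z" "\<And>\<omega>. \<omega> \<in> E \<Longrightarrow> Z \<omega> \<ge> c"
  shows "c * measure M E \<le> (\<integral>\<omega>. indicator E \<omega> * Z \<omega> \<partial>M)"
proof -
  have iZ: "integrable M (\<lambda>\<omega>. indicator E \<omega> * Z \<omega>)"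
    using integrable_real_mult_indicator[OF assms(1,2)] by (simp add: mult.commute)
  have iC: "integrable M (\<lambda>\<omega>. indicator E \<omega> * c)"
    using integrable_real_mult_indicator[OF assms(1) integrable_const[of c]] by (simp add: mult.commute)
  have "(\<integral>\<omega>. indicator E \<omega> * c \<partial>M) \<le> (\<integral>\<omega>. indicator E \<omega> * Z \<omega> \<partial>M)"
    using assms(3) by (intro integral_mono[OF iC iZ]) (auto simp: indicator_def)
  moreover have "(\<integral>\<omega>. indicator E \<omega> * c \<partial>M) = c * measure M E"
    using sets.Int_space_eq2[OF assms(1)] by (simp add: mult.commute)
  ultimately show ?thesis by linarith
qed

lemma ind_int_le:
  fixes Z :: "'a \<Rightarrow> real"
  assumes "E \<in> sets M" "integrable M Z" "\<And>\<omega>. \<omega> \<in> E \<Longrightarrow> Z \<omega> \<le> c"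
  shows "(\<integral>\<omega>. indicator E \<omega> * Z \<omega> \<partial>M) \<le> c * measure M E"
proof -
  have iZ: "integrable M (\<lambda>\<omega>. indicator E \<omega> * Z \<omega>)"
    using integrable_real_mult_indicator[OF assms(1,2)] by (simp add: mult.commute)
  have iC: "integrable M (\<lambda>\<omega>. indicator E \<omega> * c)"
    using integrable_real_mult_indicator[OF assms(1) integrable_const[of c]] by (simp add: mult.commute)
  have "(\<integral>\<omega>. indicator E \<omega> * Z \<omega> \<partial>M) \<le> (\<integral>\<omega>. indicator E \<omega> * c \<partial>M)"
    using assms(3) by (intro integral_mono[OF iZ iC]) (auto simp: indicator_def)
  moreover have "(\<integral>\<omega>. indicator E \<omega> * c \<partial>M) = c * measure M E"
    using sets.Int_space_eq2[OF assms(1)] by (simp add: mult.commute)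
  ultimately show ?thesis by linarith
qed

lemma ind_int_mono:
  fixes Z :: "'a \<Rightarrow> real"
  assumes "E1 \<in> sets M" "E2 \<in> sets M" "E1 \<subseteq> E2" "integrable M Z" "\<And>\<omega>. \<omega> \<in> space M \<Longrightarrow> Z \<omega> \<ge> 0"
  shows "(\<integral>\<omega>. indicator E1 \<omega> * Z \<omega> \<partial>M) \<le> (\<integral>\<omega>. indicator E2 \<omega> * Z \<omega> \<partial>M)"
proof -
  have i1: "integrable M (\<lambda>\<omega>. indicator E1 \<omega> * Z \<omega>)"
    using integrable_real_mult_indicator[OF assms(1,4)] by (simp add: mult.commute)
  have i2: "integrable M (\<lambda>\<omega>. indicator E2 \<omega> * Z \<omega>)"
    using integrable_real_mult_indicator[OF assms(2,4)] by (simp add: mult.commute)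
  show ?thesis
    using assms(3,5) by (intro integral_mono[OF i1 i2]) (auto simp: indicator_def)
qed

lemma ind_int_split:
  fixes Z :: "'a \<Rightarrow> real"
  assumes "E1 \<in> sets M" "E2 \<in> sets M" "E1 \<inter> E2 = {}" "integrable M Z"
  shows "(\<integral>\<omega>. indicator (E1 \<union> E2) \<omega> * Z \<omega> \<partial>M) = (\<integral>\<omega>. indicator E1 \<omega> * Z \<omega> \<partial>M) + (\<integral>\<omega>. indicator E2 \<omega> * Z \<omega> \<partial>M)"
proof -
  have "(\<lambda>\<omega>. indicator (E1 \<union> E2) \<omega> * Z \<omega>) = (\<lambda>\<omega>. indicator E1 \<omega> * Z \<omega> + indicator E2 \<omega> * Z \<omega>)"
    using assms(3) by (auto simp: indicator_def fun_eq_iff)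
  then show ?thesis
    using integrable_real_mult_indicator[OF assms(1,4)] integrable_real_mult_indicator[OF assms(2,4)]
    by (simp add: Bochner_Integration.integral_add mult.commute)
qed

lemma dsuper_sets:
  assumes "dsuper M G Z"
  shows "\<And>i. G i \<subseteq> sets M" "\<And>i c. {\<omega>\<in>space M. Z i \<omega> < c} \<in> G i"
    "\<And>i c. {\<omega>\<in>space M. Z i \<omega> \<ge> c} \<in> G i" "\<And>i. Z i \<in> borel_measurable M"
    "\<And>i E c. E \<in> G i \<Longrightarrow> {\<omega>\<in>E. Z i \<omega> < c} \<in> G i"
    "\<And>i E c. E \<in> G i \<Longrightarrow> {\<omega>\<in>E. Z i \<omega> \<ge> c} \<in> G i"
proof -
  show "\<And>i. G i \<subseteq> sets M" "\<And>i c. {\<omega>\<in>space M. Z i \<omega> < c} \<in> G i"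
    using dsuperD[OF assms] by blast+
  show ge: "\<And>i c. {\<omega>\<in>space M. Z i \<omega> \<ge> c} \<in> G i"
  proof -
    fix i c
    interpret sa: sigma_algebra "space M" "G i" using dsuperD(2)[OF assms] .
    have "{\<omega>\<in>space M. Z i \<omega> \<ge> c} = space M - {\<omega>\<in>space M. Z i \<omega> < c}" by auto
    moreover have "{\<omega>\<in>space M. Z i \<omega> < c} \<in> G i" using dsuperD(4)[OF assms] .
    ultimately show "{\<omega>\<in>space M. Z i \<omega> \<ge> c} \<in> G i"
      using sa.compl_sets by auto
  qed
  show "\<And>i. Z i \<in> borel_measurable M" using dsuperD(6)[OF assms] by auto
  show "\<And>i E c. E \<in> G i \<Longrightarrow> {\<omega>\<in>E. Z i \<omega> < c} \<in> G i"
  proof -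
    fix i E c assume E: "E \<in> G i"
    interpret sa: sigma_algebra "space M" "G i" using dsuperD(2)[OF assms] .
    have "E \<subseteq> space M" using E dsuperD(1)[OF assms] sets.sets_into_space by blast
    then have "{\<omega>\<in>E. Z i \<omega> < c} = E \<inter> {\<omega>\<in>space M. Z i \<omega> < c}" by auto
    then show "{\<omega>\<in>E. Z i \<omega> < c} \<in> G i"
      using E dsuperD(4)[OF assms] sa.Int by auto
  qed
  show "\<And>i E c. E \<in> G i \<Longrightarrow> {\<omega>\<in>E. Z i \<omega> \<ge> c} \<in> G i"
  proof -
    fix i E c assume E: "E \<in> G i"
    interpret sa: sigma_algebra "space M" "G i" using dsuperD(2)[OF assms] .
    have "E \<subseteq> space M" using E dsuperD(1)[OF assms] sets.sets_into_space by blast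
    then have "{\<omega>\<in>E. Z i \<omega> \<ge> c} = E \<inter> {\<omega>\<in>space M. Z i \<omega> \<ge> c}" by auto
    then show "{\<omega>\<in>E. Z i \<omega> \<ge> c} \<in> G i"
      using E ge sa.Int by auto
  qed
qed

lemma exc_set:
  assumes "dsuper M G Z" "E \<in> sets M"
  shows "{\<omega>\<in>E. \<exists>i\<le>N. Z i \<omega> \<ge> c} \<in> sets M"
proof -
  have "{\<omega>\<in>E. \<exists>i\<le>N. Z i \<omega> \<ge> c} = E \<inter> (\<Union>i\<le>N. {\<omega>\<in>space M. Z i \<omega> \<ge> c})"
    using sets.sets_into_space[OF assms(2)] by auto
  moreover have "{\<omega>\<in>space M. Z i \<omega> \<ge> c} \<in> sets M" for i
    using dsuper_sets(1,3)[OF assms(1)] by blast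
  ultimately show ?thesis using assms(2) by auto
qed

lemma max1:
  assumes "dsuper M G Z" "lv > 0" "E \<in> G 0"
  shows "lv * measure M {\<omega>\<in>E. \<exists>i\<le>N. Z i \<omega> \<ge> lv} \<le> (\<integral>\<omega>. indicator E \<omega> * Z 0 \<omega> \<partial>M)"
  using assms
proof (induction N arbitrary: G Z E)
  case 0
  note ds = dsuper_sets[OF "0.prems"(1)]
  have Es: "E \<in> sets M" using ds(1) "0.prems"(3) by blast
  have E1: "{\<omega>\<in>E. Z 0 \<omega> \<ge> lv} \<in> sets M" using ds(1) ds(6)[OF "0.prems"(3)] by blast
  have int: "integrable M (Z 0)" using dsuperD(6)[OF "0.prems"(1)] .
  have "lv * measure M {\<omega>\<in>E. \<exists>i\<le>0. Z i \<omega> \<ge> lv} = lv * measure M {\<omega>\<in>E. Z 0 \<omega> \<ge> lv}" by simp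
  also have "\<dots> \<le> (\<integral>\<omega>. indicator {\<omega>\<in>E. Z 0 \<omega> \<ge> lv} \<omega> * Z 0 \<omega> \<partial>M)"
    by (rule ind_int_ge[OF E1 int]) auto
  also have "\<dots> \<le> (\<integral>\<omega>. indicator E \<omega> * Z 0 \<omega> \<partial>M)"
    using dsuperD(5)[OF "0.prems"(1)] by (intro ind_int_mono[OF E1 Es _ int]) auto
  finally show ?case .
next
  case (Suc N)
  note ds = dsuper_sets[OF Suc.prems(1)]
  have E: "E \<in> G 0" by (fact Suc.prems(3))
  have Es: "E \<in> sets M" using subsetD[OF ds(1) E] .
  define E1 where "E1 = {\<omega>\<in>E. Z 0 \<omega> \<ge> lv}"
  define E2 where "E2 = {\<omega>\<in>E. Z 0 \<omega> < lv}"
  have E1G: "E1 \<in> G 0" unfolding E1_def by (rule ds(6)[OF E])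
  have E2G: "E2 \<in> G 0" unfolding E2_def by (rule ds(5)[OF E])
  have E1s: "E1 \<in> sets M" using subsetD[OF ds(1) E1G] .
  have E2s: "E2 \<in> sets M" using subsetD[OF ds(1) E2G] .
  have E2G1: "E2 \<in> G (Suc 0)" using subsetD[OF dsuperD(3)[OF Suc.prems(1), of 0] E2G] .
  have int0: "integrable M (Z 0)" using dsuperD(6)[OF Suc.prems(1)] .
  define S2 where "S2 = {\<omega>\<in>E2. \<exists>i\<le>N. Z (Suc i) \<omega> \<ge> lv}"
  have IH: "lv * measure M S2 \<le> (\<integral>\<omega>. indicator E2 \<omega> * Z (Suc 0) \<omega> \<partial>M)"
    unfolding S2_def by (rule Suc.IH[OF dsuper_shift[OF Suc.prems(1)] Suc.prems(2) E2G1])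
  have sup: "(\<integral>\<omega>. indicator E2 \<omega> * Z (Suc 0) \<omega> \<partial>M) \<le> (\<integral>\<omega>. indicator E2 \<omega> * Z 0 \<omega> \<partial>M)"
    using dsuperD(7)[OF Suc.prems(1) E2G] .
  have S2s: "S2 \<in> sets M" unfolding S2_def using exc_set[OF dsuper_shift[OF Suc.prems(1)] E2s, of N lv] .
  have sub: "{\<omega>\<in>E. \<exists>i\<le>Suc N. Z i \<omega> \<ge> lv} \<subseteq> E1 \<union> S2"
  proof
    fix \<omega> assume "\<omega> \<in> {\<omega>\<in>E. \<exists>i\<le>Suc N. Z i \<omega> \<ge> lv}"
    then obtain i where i: "\<omega> \<in> E" "i \<le> Suc N" "Z i \<omega> \<ge> lv" by blast
    show "\<omega> \<in> E1 \<union> S2"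
    proof (cases "Z 0 \<omega> \<ge> lv")
      case True then show ?thesis using i(1) unfolding E1_def by blast
    next
      case False
      then have "\<omega> \<in> E2" using i(1) unfolding E2_def by simp
      moreover have "i \<noteq> 0" using False i(3) by (cases i) auto
      then obtain i' where "i = Suc i'" by (cases i) auto
      ultimately show ?thesis using i(2,3) unfolding S2_def by auto
    qed
  qed
  have "measure M {\<omega>\<in>E. \<exists>i\<le>Suc N. Z i \<omega> \<ge> lv} \<le> measure M (E1 \<union> S2)"
    using sub E1s S2s by (intro finite_measure_mono) auto
  also have "\<dots> \<le> measure M E1 + measure M S2"
    using E1s S2s by (rule measure_Un_le)
  finally have "lv * measure M {\<omega>\<in>E. \<exists>i\<le>Suc N. Z i \<omega> \<ge> lv} \<le> lv * measure M E1 + lv * measure M S2"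
    using Suc.prems(2) mult_left_mono[of _ _ lv] by (simp add: distrib_left[symmetric])
  also have "\<dots> \<le> (\<integral>\<omega>. indicator E1 \<omega> * Z 0 \<omega> \<partial>M) + (\<integral>\<omega>. indicator E2 \<omega> * Z 0 \<omega> \<partial>M)"
  proof -
    have "lv * measure M E1 \<le> (\<integral>\<omega>. indicator E1 \<omega> * Z 0 \<omega> \<partial>M)"
      by (rule ind_int_ge[OF E1s int0]) (simp add: E1_def)
    then show ?thesis using IH sup by linarith
  qed
  also have "\<dots> = (\<integral>\<omega>. indicator (E1 \<union> E2) \<omega> * Z 0 \<omega> \<partial>M)"
    by (rule ind_int_split[symmetric, OF E1s E2s _ int0]) (auto simp: E1_def E2_def)
  also have "E1 \<union> E2 = E" by (auto simp: E1_def E2_def)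
  finally show ?case .
qed

lemma exc2_set:
  assumes "dsuper M G Z" "E \<in> sets M"
  shows "{\<omega>\<in>E. \<exists>j\<le>N. Z j \<omega> < th \<and> (\<exists>i. j \<le> i \<and> i \<le> N \<and> Z i \<omega> \<ge> lv)} \<in> sets M"
proof -
  have [measurable]: "Z i \<in> borel_measurable M" for i using dsuper_sets(4)[OF assms(1)] .
  have [measurable]: "E \<in> sets M" by (fact assms(2))
  have "{\<omega>\<in>space M. \<omega> \<in> E \<and> (\<exists>j\<le>N. Z j \<omega> < th \<and> (\<exists>i. j \<le> i \<and> i \<le> N \<and> Z i \<omega> \<ge> lv))} \<in> sets M"
    by measurable
  moreover have "{\<omega>\<in>space M. \<omega> \<in> E \<and> (\<exists>j\<le>N. Z j \<omega> < th \<and> (\<exists>i. j \<le> i \<and> i \<le> N \<and> Z i \<omega> \<ge> lv))}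
     = {\<omega>\<in>E. \<exists>j\<le>N. Z j \<omega> < th \<and> (\<exists>i. j \<le> i \<and> i \<le> N \<and> Z i \<omega> \<ge> lv)}"
    using sets.sets_into_space[OF assms(2)] by blast
  ultimately show ?thesis by simp
qed

lemma max2:
  assumes "dsuper M G Z" "0 < th" "th \<le> lv" "E \<in> G 0"
  shows "lv * measure M {\<omega>\<in>E. \<exists>j\<le>N. Z j \<omega> < th \<and> (\<exists>i. j \<le> i \<and> i \<le> N \<and> Z i \<omega> \<ge> lv)} \<le> th * measure M E"
  using assms
proof (induction N arbitrary: G Z E)
  case 0
  have "{\<omega>\<in>E. \<exists>j\<le>0. Z j \<omega> < th \<and> (\<exists>i. j \<le> i \<and> i \<le> 0 \<and> Z i \<omega> \<ge> lv)} = {}"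
    using "0.prems"(3) by auto
  then show ?case using "0.prems"(2) by (metis measure_empty mult_zero_right measure_nonneg mult_nonneg_nonneg less_imp_le)
next
  case (Suc N)
  note ds = dsuper_sets[OF Suc.prems(1)]
  have E: "E \<in> G 0" by (fact Suc.prems(4))
  have Es: "E \<in> sets M" using subsetD[OF ds(1) E] .
  define E1 where "E1 = {\<omega>\<in>E. Z 0 \<omega> < th}"
  define E2 where "E2 = {\<omega>\<in>E. Z 0 \<omega> \<ge> th}"
  have E1G: "E1 \<in> G 0" unfolding E1_def by (rule ds(5)[OF E])
  have E2G: "E2 \<in> G 0" unfolding E2_def by (rule ds(6)[OF E])
  have E1s: "E1 \<in> sets M" using subsetD[OF ds(1) E1G] .
  have E2s: "E2 \<in> sets M" using subsetD[OF ds(1) E2G] .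
  have E2G1: "E2 \<in> G (Suc 0)" using subsetD[OF dsuperD(3)[OF Suc.prems(1), of 0] E2G] .
  have int0: "integrable M (Z 0)" using dsuperD(6)[OF Suc.prems(1)] .
  have lv: "lv > 0" using Suc.prems(2,3) by linarith
  define S1 where "S1 = {\<omega>\<in>E1. \<exists>i\<le>Suc N. Z i \<omega> \<ge> lv}"
  define S2 where "S2 = {\<omega>\<in>E2. \<exists>j\<le>N. Z (Suc j) \<omega> < th \<and> (\<exists>i. j \<le> i \<and> i \<le> N \<and> Z (Suc i) \<omega> \<ge> lv)}"
  have S1s: "S1 \<in> sets M" unfolding S1_def using exc_set[OF Suc.prems(1) E1s, of "Suc N" lv] .
  have S2s: "S2 \<in> sets M" unfolding S2_def using exc2_set[OF dsuper_shift[OF Suc.prems(1)] E2s, of N th lv] .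
  have b1: "lv * measure M S1 \<le> th * measure M E1"
  proof -
    have "lv * measure M S1 \<le> (\<integral>\<omega>. indicator E1 \<omega> * Z 0 \<omega> \<partial>M)"
      unfolding S1_def by (rule max1[OF Suc.prems(1) lv E1G])
    also have "\<dots> \<le> th * measure M E1"
      by (rule ind_int_le[OF E1s int0]) (simp add: E1_def)
    finally show ?thesis .
  qed
  have b2: "lv * measure M S2 \<le> th * measure M E2"
    unfolding S2_def by (rule Suc.IH[OF dsuper_shift[OF Suc.prems(1)] Suc.prems(2,3) E2G1])
  have sub: "{\<omega>\<in>E. \<exists>j\<le>Suc N. Z j \<omega> < th \<and> (\<exists>i. j \<le> i \<and> i \<le> Suc N \<and> Z i \<omega> \<ge> lv)} \<subseteq> S1 \<union> S2"
  proof
    fix \<omega> assume "\<omega> \<in> {\<omega>\<in>E. \<exists>j\<le>Suc N. Z j \<omega> < th \<and> (\<exists>i. j \<le> i \<and> i \<le> Suc N \<and> Z i \<omega> \<ge> lv)}"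
    then obtain i j where ij: "\<omega> \<in> E" "j \<le> Suc N" "Z j \<omega> < th" "j \<le> i" "i \<le> Suc N" "Z i \<omega> \<ge> lv" by blast
    show "\<omega> \<in> S1 \<union> S2"
    proof (cases "Z 0 \<omega> < th")
      case True then show ?thesis using ij unfolding S1_def E1_def by blast
    next
      case False
      then have "\<omega> \<in> E2" using ij(1) unfolding E2_def by simp
      moreover have "j \<noteq> 0" using False ij(3) by (cases j) auto
      then obtain j' where j': "j = Suc j'" by (cases j) auto
      moreover obtain i' where i': "i = Suc i'" using ij(4) j' by (cases i) auto
      ultimately show ?thesis using ij unfolding S2_def by auto
    qed
  qed
  have "measure M {\<omega>\<in>E. \<exists>j\<le>Suc N. Z j \<omega> < th \<and> (\<exists>i. j \<le> i \<and> i \<le> Suc N \<and> Z i \<omega> \<ge> lv)} \<le> measure M (S1 \<union> S2)"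
    using sub S1s S2s by (intro finite_measure_mono) auto
  also have "\<dots> \<le> measure M S1 + measure M S2"
    using S1s S2s by (rule measure_Un_le)
  finally have "lv * measure M {\<omega>\<in>E. \<exists>j\<le>Suc N. Z j \<omega> < th \<and> (\<exists>i. j \<le> i \<and> i \<le> Suc N \<and> Z i \<omega> \<ge> lv)} \<le> lv * measure M S1 + lv * measure M S2"
    using lv mult_left_mono[of _ _ lv] by (simp add: distrib_left[symmetric])
  also have "\<dots> \<le> th * measure M E1 + th * measure M E2" using b1 b2 by linarith
  also have "\<dots> = th * measure M (E1 \<union> E2)"
    using finite_measure_Union[OF E1s E2s] by (simp add: E1_def E2_def distrib_left disjoint_iff)
  also have "E1 \<union> E2 = E" by (auto simp: E1_def E2_def)
  finally show ?case .
qed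

end


context rsol begin

definition good :: "(real^'n \<Rightarrow> real) \<Rightarrow> (real^'n \<Rightarrow> real^'n) \<Rightarrow> (real^'n \<Rightarrow> real^'n^'n) \<Rightarrow> bool" where
  "good f g H \<longleftrightarrow> C2_with f g H \<and> continuous_on UNIV f \<and> continuous_on UNIV (rep_gen A \<sigma> g H) \<and>
     (\<forall>y\<in>open_simplex. 0 \<le> f y \<and> f y \<le> 1 \<and> rep_gen A \<sigma> g H y \<le> 0)"

lemma goodD:
  assumes "good f g H"
  shows "C2_with f g H" "continuous_on UNIV f" "continuous_on UNIV (rep_gen A \<sigma> g H)"
    "\<And>y. y \<in> open_simplex \<Longrightarrow> 0 \<le> f y" "\<And>y. y \<in> open_simplex \<Longrightarrow> f y \<le> 1"
    "\<And>y. y \<in> open_simplex \<Longrightarrow> rep_gen A \<sigma> g H y \<le> 0"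
    "\<And>y. y \<in> open_simplex \<Longrightarrow> \<bar>f y\<bar> \<le> 1"
  using assms unfolding good_def by auto

lemma grid_dsuper:
  assumes gd: "good f g H"
  shows "dsuper M (\<lambda>i. F (real i / 2^l)) (\<lambda>i \<omega>. f (X (real i / 2^l) \<omega>))"
  unfolding dsuper_def
proof (intro allI conjI ballI)
  fix i :: nat
  note gD = goodD[OF gd]
  have t0: "real i / 2^l \<ge> 0" by simp
  show "F (real i / 2 ^ l) \<subseteq> sets M" by (rule F_sub)
  show "sigma_algebra (space M) (F (real i / 2 ^ l))" by (rule F_sigma)
  show "F (real i / 2 ^ l) \<subseteq> F (real (Suc i) / 2 ^ l)" by (rule F_mono) (simp add: divide_right_mono)
  fix c show "{\<omega> \<in> space M. f (X (real i / 2 ^ l) \<omega>) < c} \<in> F (real i / 2 ^ l)"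
    by (rule F_less(1)[OF gD(2) t0 order_refl])
next
  fix i :: nat and \<omega> assume "\<omega> \<in> space M"
  then show "0 \<le> f (X (real i / 2 ^ l) \<omega>)" using goodD(4)[OF gd] Xsimp by simp
next
  fix i :: nat
  show "integrable M (\<lambda>\<omega>. f (X (real i / 2 ^ l) \<omega>))"
    by (rule fX_int[OF goodD(2)[OF gd] _ goodD(7)[OF gd]]) simp
next
  fix i :: nat and E assume E: "E \<in> F (real i / 2 ^ l)"
  show "(\<integral>\<omega>. indicator E \<omega> * f (X (real (Suc i) / 2 ^ l) \<omega>) \<partial>M) \<le> (\<integral>\<omega>. indicator E \<omega> * f (X (real i / 2 ^ l) \<omega>) \<partial>M)"
    by (rule supermart[OF goodD(1,2,7,3,6)[OF gd] _ _ E]) (auto simp: divide_right_mono)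
qed

lemma stay_grid:
  assumes gd: "good f g H" and lv: "lv > 0"
  shows "lv * measure M {\<omega>\<in>space M. \<exists>i\<le>N. f (X (real i / 2^l) \<omega>) \<ge> lv} \<le> f x"
proof -
  have top: "space M \<in> F (real 0 / 2^l)" unfolding nat_filtration_def by (rule sigma_sets_top)
  have "lv * measure M {\<omega>\<in>space M. \<exists>i\<le>N. f (X (real i / 2^l) \<omega>) \<ge> lv}
     \<le> (\<integral>\<omega>. indicator (space M) \<omega> * f (X (real 0 / 2^l) \<omega>) \<partial>M)"
    by (rule max1[OF grid_dsuper[OF gd] lv top])
  also have "\<dots> = (\<integral>\<omega>. f x \<partial>M)"
    by (rule Bochner_Integration.integral_cong) (auto simp: X0)
  also have "\<dots> = f x" by (simp add: prob_space)
  finally show ?thesis .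
qed

lemma cross_grid:
  assumes gd: "good f g H" and th: "0 < th" "th \<le> lv"
  shows "lv * measure M {\<omega>\<in>space M. \<exists>j\<le>N. f (X (real j / 2^l) \<omega>) < th \<and>
             (\<exists>i. j \<le> i \<and> i \<le> N \<and> f (X (real i / 2^l) \<omega>) \<ge> lv)} \<le> th"
proof -
  have top: "space M \<in> F (real 0 / 2^l)" unfolding nat_filtration_def by (rule sigma_sets_top)
  have "lv * measure M {\<omega>\<in>space M. \<exists>j\<le>N. f (X (real j / 2^l) \<omega>) < th \<and>
             (\<exists>i. j \<le> i \<and> i \<le> N \<and> f (X (real i / 2^l) \<omega>) \<ge> lv)} \<le> th * measure M (space M)"
    by (rule max2[OF grid_dsuper[OF gd] th top])
  then show ?thesis by (simp add: prob_space)
qed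

end


lemma dyadic:
  fixes t \<delta> :: real
  assumes t: "t \<ge> 0" and d: "\<delta> > 0"
  shows "\<exists>L. \<forall>l\<ge>L. t \<le> real (nat \<lceil>t * 2^l\<rceil>) / 2^l \<and> real (nat \<lceil>t * 2^l\<rceil>) / 2^l < t + \<delta>
                 \<and> nat \<lceil>t * 2^l\<rceil> \<le> l * 2^l"
proof -
  obtain L1 where L1: "(1/2::real)^L1 < \<delta>" using real_arch_pow_inv[OF d, of "1/2"] by auto
  define L where "L = max L1 (nat \<lceil>t\<rceil> + 1)"
  show ?thesis
  proof (intro exI allI impI conjI)
    fix l assume l: "L \<le> l"
    define q :: real where "q = 2^l"
    have q1: "q \<ge> 1" by (simp add: q_def)
    have tq: "t * q \<ge> 0" using t q1 by simp
    define c where "c = \<lceil>t * q\<rceil>"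
    have cge: "real_of_int c \<ge> t * q" unfolding c_def by (rule le_of_int_ceiling)
    have cge0: "c \<ge> 0" using tq cge by linarith
    have clt: "real_of_int c < t * q + 1" unfolding c_def using ceiling_correct[of "t*q"] by linarith
    have rn: "real (nat c) = real_of_int c" using cge0 by simp
    have e1: "real (nat \<lceil>t * 2^l\<rceil>) / 2^l = real_of_int c / q" using rn by (simp add: c_def q_def)
    have "t * q \<le> real_of_int c" by (fact cge)
    then have "t \<le> real_of_int c / q" using q1 by (simp add: pos_le_divide_eq)
    then show "t \<le> real (nat \<lceil>t * 2^l\<rceil>) / 2^l" using e1 by simp
    have "(1/2::real)^l \<le> (1/2)^L1" using l by (intro power_decreasing) (auto simp: L_def)
    then have q\<delta>: "1 / q < \<delta>" using L1 by (simp add: q_def power_one_over)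
    have "real_of_int c / q < (t * q + 1) / q" using clt q1 by (simp add: divide_strict_right_mono)
    also have "(t * q + 1) / q = t + 1/q" using q1 by (simp add: add_divide_distrib)
    finally show "real (nat \<lceil>t * 2^l\<rceil>) / 2^l < t + \<delta>" using e1 q\<delta> by simp
    have "t \<le> real (nat \<lceil>t\<rceil>)" by linarith
    then have tl: "t + 1 \<le> real l" using l by (simp add: L_def)
    have "t * q + 1 \<le> t * q + q" using q1 by simp
    also have "\<dots> = (t + 1) * q" by (simp add: algebra_simps)
    also have "\<dots> \<le> real l * q" using tl q1 by (intro mult_right_mono) auto
    finally have "real (nat c) \<le> real l * q" using clt rn by linarith
    then have "real (nat c) \<le> real (l * 2^l)" by (simp add: q_def)
    then show "nat \<lceil>t * 2^l\<rceil> \<le> l * 2^l" unfolding c_def q_def by (simp only: of_nat_le_iff)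
  qed
qed

context rsol begin

lemma cont_gt:
  fixes \<phi> :: "real^'n \<Rightarrow> real"
  assumes "continuous_on UNIV \<phi>" "\<omega> \<in> space M" "t \<ge> 0" "\<phi> (X t \<omega>) > c"
  shows "\<exists>\<delta>>0. \<forall>s\<ge>0. \<bar>s - t\<bar> < \<delta> \<longrightarrow> \<phi> (X s \<omega>) > c"
proof -
  have "continuous_on {0..} (\<lambda>s. \<phi> (X s \<omega>))"
    by (rule continuous_on_compose2[OF assms(1) Xcont[OF assms(2)]]) auto
  then obtain \<delta> where d: "\<delta> > 0" "\<forall>s\<in>{0..}. dist s t < \<delta> \<longrightarrow> dist (\<phi> (X s \<omega>)) (\<phi> (X t \<omega>)) < \<phi> (X t \<omega>) - c"
    using assms(3,4) unfolding continuous_on_iff by (metis atLeast_iff diff_gt_0_iff_gt)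
  show ?thesis
  proof (intro exI[of _ \<delta>] conjI allI impI)
    fix s :: real assume "s \<ge> 0" "\<bar>s - t\<bar> < \<delta>"
    then have "dist (\<phi> (X s \<omega>)) (\<phi> (X t \<omega>)) < \<phi> (X t \<omega>) - c" using d(2) by (auto simp: dist_real_def)
    then show "\<phi> (X s \<omega>) > c" by (simp add: dist_real_def abs_less_iff)
  qed (fact d(1))
qed

lemma grid_approx:
  fixes \<phi> :: "real^'n \<Rightarrow> real"
  assumes "continuous_on UNIV \<phi>" "\<omega> \<in> space M" "t \<ge> 0" "\<phi> (X t \<omega>) > c"
  shows "\<exists>L. \<forall>l\<ge>L. \<phi> (X (real (nat \<lceil>t * 2^l\<rceil>) / 2^l) \<omega>) > c \<and> nat \<lceil>t * 2^l\<rceil> \<le> l * 2^l"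
proof -
  obtain \<delta> where d: "\<delta> > 0" "\<forall>s\<ge>0. \<bar>s - t\<bar> < \<delta> \<longrightarrow> \<phi> (X s \<omega>) > c"
    using cont_gt[OF assms] by blast
  obtain L where L: "\<forall>l\<ge>L. t \<le> real (nat \<lceil>t * 2^l\<rceil>) / 2^l \<and> real (nat \<lceil>t * 2^l\<rceil>) / 2^l < t + \<delta>
                 \<and> nat \<lceil>t * 2^l\<rceil> \<le> l * 2^l" using dyadic[OF assms(3) d(1)] by blast
  show ?thesis
  proof (intro exI allI impI conjI)
    fix l assume "L \<le> l"
    with L have h: "t \<le> real (nat \<lceil>t * 2^l\<rceil>) / 2^l" "real (nat \<lceil>t * 2^l\<rceil>) / 2^l < t + \<delta>"
      "nat \<lceil>t * 2^l\<rceil> \<le> l * 2^l" by auto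
    show "\<phi> (X (real (nat \<lceil>t * 2^l\<rceil>) / 2^l) \<omega>) > c"
      using d(2) h(1,2) assms(3) by auto
    show "nat \<lceil>t * 2^l\<rceil> \<le> l * 2^l" by (fact h(3))
  qed
qed

definition Dst :: "(real^'n \<Rightarrow> real) \<Rightarrow> real \<Rightarrow> nat \<Rightarrow> 'w set" where
  "Dst \<phi> lv l = {\<omega>\<in>space M. \<exists>i\<le>l * 2^l. \<phi> (X (real i / 2^l) \<omega>) \<ge> lv}"

definition Cr :: "(real^'n \<Rightarrow> real) \<Rightarrow> real \<Rightarrow> real \<Rightarrow> nat \<Rightarrow> 'w set" where
  "Cr \<phi> th lv l = {\<omega>\<in>space M. \<exists>j\<le>l * 2^l. \<phi> (X (real j / 2^l) \<omega>) < th \<and>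
             (\<exists>i. j \<le> i \<and> i \<le> l * 2^l \<and> \<phi> (X (real i / 2^l) \<omega>) \<ge> lv)}"

lemma dbl: "real (2 * i) / 2 ^ Suc l = real i / 2^l" by simp
lemma dbl_le: "i \<le> l * 2^l \<Longrightarrow> 2 * i \<le> Suc l * 2 ^ Suc l" by simp

lemma Dst_inc: "incseq (Dst \<phi> lv)"
proof (rule incseq_SucI)
  fix l show "Dst \<phi> lv l \<subseteq> Dst \<phi> lv (Suc l)"
  proof
    fix \<omega> assume "\<omega> \<in> Dst \<phi> lv l"
    then obtain i where "\<omega> \<in> space M" "i \<le> l * 2^l" "\<phi> (X (real i / 2^l) \<omega>) \<ge> lv" by (auto simp: Dst_def)
    then show "\<omega> \<in> Dst \<phi> lv (Suc l)" unfolding Dst_def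
      by (intro CollectI conjI exI[of _ "2 * i"]) (simp_all only: dbl dbl_le)
  qed
qed

lemma Cr_inc: "incseq (Cr \<phi> th lv)"
proof (rule incseq_SucI)
  fix l show "Cr \<phi> th lv l \<subseteq> Cr \<phi> th lv (Suc l)"
  proof
    fix \<omega> assume "\<omega> \<in> Cr \<phi> th lv l"
    then obtain i j where ij: "\<omega> \<in> space M" "j \<le> l * 2^l" "\<phi> (X (real j / 2^l) \<omega>) < th" "j \<le> i" "i \<le> l * 2^l"
      "\<phi> (X (real i / 2^l) \<omega>) \<ge> lv" unfolding Cr_def by blast
    have "2 * j \<le> 2 * i" using ij(4) by simp
    then show "\<omega> \<in> Cr \<phi> th lv (Suc l)" unfolding Cr_def using ij dbl_le[OF ij(2)] dbl_le[OF ij(5)]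
      by (intro CollectI conjI exI[of _ "2 * j"] exI[of _ "2 * i"]) (simp_all only: dbl)
  qed
qed

lemma Dst_sets: "continuous_on UNIV \<phi> \<Longrightarrow> Dst \<phi> lv l \<in> sets M"
proof -
  assume c: "continuous_on UNIV \<phi>"
  have [measurable]: "(\<lambda>\<omega>. \<phi> (X (real i / 2^l) \<omega>)) \<in> borel_measurable M" for i
    by (rule fX_meas[OF c]) simp
  show ?thesis unfolding Dst_def by measurable
qed

lemma Cr_sets: "continuous_on UNIV \<phi> \<Longrightarrow> Cr \<phi> th lv l \<in> sets M"
proof -
  assume c: "continuous_on UNIV \<phi>"
  have [measurable]: "(\<lambda>\<omega>. \<phi> (X (real i / 2^l) \<omega>)) \<in> borel_measurable M" for i
    by (rule fX_meas[OF c]) simp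
  show ?thesis unfolding Cr_def by measurable
qed

lemma union_bound:
  assumes "range D \<subseteq> sets M" "incseq D" "\<And>l. measure M (D l) \<le> B"
  shows "measure M (\<Union>l. D l) \<le> B"
  using finite_Lim_measure_incseq[OF assms(1,2)] assms(3) by (intro LIMSEQ_le_const2) auto

lemma stay_bound:
  assumes gd: "good f g H" and lv: "lv > 0"
  shows "measure M (\<Union>l. Dst f lv l) \<le> f x / lv"
proof (rule union_bound)
  show "range (Dst f lv) \<subseteq> sets M" using Dst_sets[OF goodD(2)[OF gd]] by auto
  show "incseq (Dst f lv)" by (rule Dst_inc)
  fix l
  have "lv * measure M (Dst f lv l) \<le> f x" unfolding Dst_def by (rule stay_grid[OF gd lv])
  then show "measure M (Dst f lv l) \<le> f x / lv" using lv by (simp add: field_simps mult.commute)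
qed

lemma cross_bound:
  assumes gd: "good f g H" and th: "0 < th" "th \<le> lv"
  shows "measure M (\<Union>l. Cr f th lv l) \<le> th / lv"
proof (rule union_bound)
  show "range (Cr f th lv) \<subseteq> sets M" using Cr_sets[OF goodD(2)[OF gd]] by auto
  show "incseq (Cr f th lv)" by (rule Cr_inc)
  fix l
  have lv: "lv > 0" using th by linarith
  have "lv * measure M (Cr f th lv l) \<le> th" unfolding Cr_def by (rule cross_grid[OF gd th])
  then show "measure M (Cr f th lv l) \<le> th / lv" using lv by (simp add: field_simps mult.commute)
qed

lemma stay_path:
  fixes \<phi> :: "real^'n \<Rightarrow> real"
  assumes "continuous_on UNIV \<phi>" "\<omega> \<in> space M" "t \<ge> 0" "\<phi> (X t \<omega>) > lv"
  shows "\<omega> \<in> (\<Union>l. Dst \<phi> lv l)"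
proof -
  obtain L where L: "\<forall>l\<ge>L. \<phi> (X (real (nat \<lceil>t * 2^l\<rceil>) / 2^l) \<omega>) > lv \<and> nat \<lceil>t * 2^l\<rceil> \<le> l * 2^l"
    using grid_approx[OF assms] by blast
  then have "\<omega> \<in> Dst \<phi> lv L" unfolding Dst_def using assms(2)
    by (intro CollectI conjI exI[of _ "nat \<lceil>t * 2^L\<rceil>"]) (auto intro: less_imp_le)
  then show ?thesis by blast
qed

lemma cross_path:
  fixes \<phi> \<psi> :: "real^'n \<Rightarrow> real" and th lv \<eta> r t :: real
  assumes c1: "continuous_on UNIV \<phi>" and c2: "continuous_on UNIV \<psi>" and \<omega>: "\<omega> \<in> space M"
    and rt: "0 \<le> r" "r \<le> t" and r: "\<phi> (X r \<omega>) < th" and t: "\<psi> (X t \<omega>) > \<eta>"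
    and imp: "\<And>y. y \<in> open_simplex \<Longrightarrow> \<psi> y > \<eta> \<Longrightarrow> \<phi> y \<ge> lv"
  shows "\<omega> \<in> (\<Union>l. Cr \<phi> th lv l)"
proof -
  have cm: "continuous_on UNIV (\<lambda>y. - \<phi> y)" by (intro continuous_intros c1)
  obtain L1 where L1: "\<forall>l\<ge>L1. - \<phi> (X (real (nat \<lceil>r * 2^l\<rceil>) / 2^l) \<omega>) > - th \<and> nat \<lceil>r * 2^l\<rceil> \<le> l * 2^l"
    using grid_approx[OF cm \<omega> rt(1), of "- th"] r by auto
  obtain L2 where L2: "\<forall>l\<ge>L2. \<psi> (X (real (nat \<lceil>t * 2^l\<rceil>) / 2^l) \<omega>) > \<eta> \<and> nat \<lceil>t * 2^l\<rceil> \<le> l * 2^l"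
    using grid_approx[OF c2 \<omega> order_trans[OF rt] t] by auto
  define l where "l = max L1 L2"
  have h1: "\<phi> (X (real (nat \<lceil>r * 2^l\<rceil>) / 2^l) \<omega>) < th" "nat \<lceil>r * 2^l\<rceil> \<le> l * 2^l"
    using L1 by (auto simp: l_def)
  have h2: "\<psi> (X (real (nat \<lceil>t * 2^l\<rceil>) / 2^l) \<omega>) > \<eta>" "nat \<lceil>t * 2^l\<rceil> \<le> l * 2^l"
    using L2 by (auto simp: l_def)
  have h3: "\<phi> (X (real (nat \<lceil>t * 2^l\<rceil>) / 2^l) \<omega>) \<ge> lv"
    using imp[OF Xsimp[OF \<omega>] h2(1)] by simp
  have mono: "nat \<lceil>r * 2^l\<rceil> \<le> nat \<lceil>t * 2^l\<rceil>"
    using rt by (intro nat_mono ceiling_mono mult_right_mono) auto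
  have "\<omega> \<in> Cr \<phi> th lv l" unfolding Cr_def using \<omega> h1 h2(2) h3 mono
    by (intro CollectI conjI exI[of _ "nat \<lceil>r * 2^l\<rceil>"] exI[of _ "nat \<lceil>t * 2^l\<rceil>"]) auto
  then show ?thesis by blast
qed

end


context rsol begin

lemma grid_approx2:
  fixes \<phi> :: "real^'n \<Rightarrow> real"
  assumes "continuous_on UNIV \<phi>" "\<omega> \<in> space M" "t \<ge> 0" "\<phi> (X t \<omega>) > c" "\<delta> > 0"
  shows "\<exists>i l. t \<le> real i / 2^l \<and> real i / 2^l < t + \<delta> \<and> \<phi> (X (real i / 2^l) \<omega>) > c"
proof -
  obtain d where d: "d > 0" "\<forall>s\<ge>0. \<bar>s - t\<bar> < d \<longrightarrow> \<phi> (X s \<omega>) > c"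
    using cont_gt[OF assms(1-4)] by blast
  obtain L where L: "\<forall>l\<ge>L. t \<le> real (nat \<lceil>t * 2^l\<rceil>) / 2^l \<and> real (nat \<lceil>t * 2^l\<rceil>) / 2^l < t + min d \<delta>
                 \<and> nat \<lceil>t * 2^l\<rceil> \<le> l * 2^l" using dyadic[OF assms(3), of "min d \<delta>"] d(1) assms(5) by auto
  then have h: "t \<le> real (nat \<lceil>t * 2^L\<rceil>) / 2^L" "real (nat \<lceil>t * 2^L\<rceil>) / 2^L < t + min d \<delta>" by auto
  have "\<phi> (X (real (nat \<lceil>t * 2^L\<rceil>) / 2^L) \<omega>) > c" using d(2) h assms(3) by auto
  then show ?thesis using h by (intro exI[of _ "nat \<lceil>t * 2^L\<rceil>"] exI[of _ L]) auto
qed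

lemma conv_char:
  assumes \<omega>: "\<omega> \<in> space M"
  shows "((\<lambda>t. X t \<omega>) \<longlongrightarrow> p) at_top \<longleftrightarrow>
    (\<forall>m::nat. \<exists>N::nat. \<forall>i::nat. \<forall>l::nat. real N \<le> real i / 2^l \<longrightarrow> dist (X (real i / 2^l) \<omega>) p \<le> 1 / (real m + 1))"
proof
  assume "((\<lambda>t. X t \<omega>) \<longlongrightarrow> p) at_top"
  then have ev: "\<forall>e>0. eventually (\<lambda>t. dist (X t \<omega>) p < e) at_top" by (simp add: tendsto_iff)
  show "\<forall>m::nat. \<exists>N::nat. \<forall>i l. real N \<le> real i / 2^l \<longrightarrow> dist (X (real i / 2^l) \<omega>) p \<le> 1 / (real m + 1)"
  proof
    fix m :: nat
    have "eventually (\<lambda>t. dist (X t \<omega>) p < 1 / (real m + 1)) at_top" using ev by simp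
    then obtain T where T: "\<And>t. t \<ge> T \<Longrightarrow> dist (X t \<omega>) p < 1 / (real m + 1)"
      by (auto simp: eventually_at_top_linorder)
    show "\<exists>N::nat. \<forall>i l. real N \<le> real i / 2^l \<longrightarrow> dist (X (real i / 2^l) \<omega>) p \<le> 1 / (real m + 1)"
    proof (intro exI[of _ "nat \<lceil>T\<rceil>"] allI impI)
      fix i l assume "real (nat \<lceil>T\<rceil>) \<le> real i / 2^l"
      then have "T \<le> real i / 2^l" by linarith
      then show "dist (X (real i / 2^l) \<omega>) p \<le> 1 / (real m + 1)" using T less_imp_le by blast
    qed
  qed
next
  assume H: "\<forall>m::nat. \<exists>N::nat. \<forall>i l. real N \<le> real i / 2^l \<longrightarrow> dist (X (real i / 2^l) \<omega>) p \<le> 1 / (real m + 1)"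
  have cd: "continuous_on UNIV (\<lambda>y::real^'n. dist y p)" by (intro continuous_intros)
  show "((\<lambda>t. X t \<omega>) \<longlongrightarrow> p) at_top"
    unfolding tendsto_iff
  proof (intro allI impI)
    fix e :: real assume e: "e > 0"
    obtain m :: nat where m: "1 / (real m + 1) < e"
    proof -
      obtain m where "inverse (real (Suc m)) < e" using reals_Archimedean[OF e] by blast
      then show ?thesis using that[of m] by (simp add: inverse_eq_divide add.commute)
    qed
    obtain N :: nat where N: "\<forall>i l. real N \<le> real i / 2^l \<longrightarrow> dist (X (real i / 2^l) \<omega>) p \<le> 1 / (real m + 1)"
      using H by blast
    have "\<forall>t\<ge>real N. dist (X t \<omega>) p \<le> 1 / (real m + 1)"
    proof (intro allI impI)
      fix t assume t: "t \<ge> real N"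
      show "dist (X t \<omega>) p \<le> 1 / (real m + 1)"
      proof (rule ccontr)
        assume "\<not> ?thesis"
        then have "dist (X t \<omega>) p > 1 / (real m + 1)" by simp
        then obtain i l where il: "t \<le> real i / 2^l" "dist (X (real i / 2^l) \<omega>) p > 1 / (real m + 1)"
          using grid_approx2[OF cd \<omega> _ _ zero_less_one] t by (meson of_nat_0_le_iff order_trans)
        then show False using N t by (meson order_trans not_le)
      qed
    qed
    then show "eventually (\<lambda>t. dist (X t \<omega>) p < e) at_top"
      unfolding eventually_at_top_linorder using m by (meson le_less_trans)
  qed
qed

lemma conv_sets: "{\<omega>\<in>space M. ((\<lambda>t. X t \<omega>) \<longlongrightarrow> p) at_top} \<in> sets M"
proof -
  have [measurable]: "(\<lambda>\<omega>. dist (X (real i / 2^l) \<omega>) p) \<in> borel_measurable M" for i l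
    by (rule fX_meas) (auto intro: continuous_intros)
  have "{\<omega>\<in>space M. ((\<lambda>t. X t \<omega>) \<longlongrightarrow> p) at_top} =
    {\<omega>\<in>space M. \<forall>m::nat. \<exists>N::nat. \<forall>i::nat. \<forall>l::nat. real N \<le> real i / 2^l \<longrightarrow> dist (X (real i / 2^l) \<omega>) p \<le> 1 / (real m + 1)}"
    using conv_char by blast
  also have "\<dots> \<in> sets M" by measurable
  finally show ?thesis .
qed

lemma stay_char:
  assumes \<omega>: "\<omega> \<in> space M" and U: "open U" "U \<noteq> UNIV"
  shows "(\<forall>t\<ge>0. X t \<omega> \<in> U) \<longleftrightarrow>
    (\<forall>N::nat. \<exists>m::nat. \<forall>i::nat. \<forall>l::nat. real i / 2^l \<le> real N \<longrightarrow> infdist (X (real i / 2^l) \<omega>) (- U) \<ge> 1 / (real m + 1))"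
proof
  have cl: "closed (- U)" "- U \<noteq> {}" using U by auto
  assume H: "\<forall>t\<ge>0. X t \<omega> \<in> U"
  show "\<forall>N::nat. \<exists>m::nat. \<forall>i l. real i / 2^l \<le> real N \<longrightarrow> infdist (X (real i / 2^l) \<omega>) (- U) \<ge> 1 / (real m + 1)"
  proof
    fix N :: nat
    have c: "continuous_on {0..real N} (\<lambda>t. infdist (X t \<omega>) (- U))"
      by (intro continuous_on_infdist continuous_on_subset[OF Xcont[OF \<omega>]]) auto
    obtain t0 where t0: "t0 \<in> {0..real N}" "\<forall>t\<in>{0..real N}. infdist (X t0 \<omega>) (- U) \<le> infdist (X t \<omega>) (- U)"
      using continuous_attains_inf[OF compact_Icc _ c] by auto
    have pos: "infdist (X t0 \<omega>) (- U) > 0"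
      using infdist_pos_not_in_closed[OF cl] H t0(1) by auto
    obtain m :: nat where m: "1 / (real m + 1) < infdist (X t0 \<omega>) (- U)"
    proof -
      obtain m where "inverse (real (Suc m)) < infdist (X t0 \<omega>) (- U)" using reals_Archimedean[OF pos] by blast
      then show ?thesis using that[of m] by (simp add: inverse_eq_divide add.commute)
    qed
    show "\<exists>m::nat. \<forall>i l. real i / 2^l \<le> real N \<longrightarrow> infdist (X (real i / 2^l) \<omega>) (- U) \<ge> 1 / (real m + 1)"
      using m t0(2) by (intro exI[of _ m] allI impI) (smt (verit) atLeastAtMost_iff divide_nonneg_nonneg of_nat_0_le_iff zero_le_power)
  qed
next
  have cl: "closed (- U)" "- U \<noteq> {}" using U by auto
  assume H: "\<forall>N::nat. \<exists>m::nat. \<forall>i l. real i / 2^l \<le> real N \<longrightarrow> infdist (X (real i / 2^l) \<omega>) (- U) \<ge> 1 / (real m + 1)"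
  have cd: "continuous_on UNIV (\<lambda>y::real^'n. - infdist y (- U))" by (intro continuous_intros)
  show "\<forall>t\<ge>0. X t \<omega> \<in> U"
  proof (intro allI impI)
    fix t :: real assume t: "t \<ge> 0"
    obtain m :: nat where m: "\<forall>i l. real i / 2^l \<le> real (nat \<lceil>t\<rceil> + 1) \<longrightarrow> infdist (X (real i / 2^l) \<omega>) (- U) \<ge> 1 / (real m + 1)"
      using H by blast
    show "X t \<omega> \<in> U"
    proof (rule ccontr)
      assume "X t \<omega> \<notin> U"
      then have "- infdist (X t \<omega>) (- U) > - (1 / (real m + 1))" by simp
      then obtain i l where il: "t \<le> real i / 2^l" "real i / 2^l < t + 1"
        "- infdist (X (real i / 2^l) \<omega>) (- U) > - (1 / (real m + 1))"
        using grid_approx2[OF cd \<omega> t _ zero_less_one] by blast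
      have "real i / 2^l \<le> real (nat \<lceil>t\<rceil> + 1)" using il(2) by linarith
      then show False using m il(3) by force
    qed
  qed
qed

lemma stay_sets:
  assumes U: "open U"
  shows "{\<omega>\<in>space M. \<forall>t\<ge>0. X t \<omega> \<in> U} \<in> sets M"
proof (cases "U = UNIV")
  case True then show ?thesis by simp
next
  case False
  have [measurable]: "(\<lambda>\<omega>. infdist (X (real i / 2^l) \<omega>) (- U)) \<in> borel_measurable M" for i l
    by (rule fX_meas) (auto intro: continuous_intros)
  have "{\<omega>\<in>space M. \<forall>t\<ge>0. X t \<omega> \<in> U} =
    {\<omega>\<in>space M. \<forall>N::nat. \<exists>m::nat. \<forall>i::nat. \<forall>l::nat. real i / 2^l \<le> real N \<longrightarrow> infdist (X (real i / 2^l) \<omega>) (- U) \<ge> 1 / (real m + 1)}"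
    using stay_char[OF _ U False] by blast
  also have "\<dots> \<in> sets M" by measurable
  finally show ?thesis .
qed

lemma target_sets:
  assumes "open U"
  shows "{\<omega>\<in>space M. (\<forall>t\<ge>0. X t \<omega> \<in> U) \<and> ((\<lambda>t. X t \<omega>) \<longlongrightarrow> p) at_top} \<in> sets M"
proof -
  have "{\<omega>\<in>space M. (\<forall>t\<ge>0. X t \<omega> \<in> U) \<and> ((\<lambda>t. X t \<omega>) \<longlongrightarrow> p) at_top} =
     {\<omega>\<in>space M. \<forall>t\<ge>0. X t \<omega> \<in> U} \<inter> {\<omega>\<in>space M. ((\<lambda>t. X t \<omega>) \<longlongrightarrow> p) at_top}" by auto
  then show ?thesis using stay_sets[OF assms] conv_sets by auto
qed

end


lemma dist_simplex:
  fixes y :: "real^'n"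
  assumes "y \<in> open_simplex"
  shows "dist y (axis k 1) \<le> 2 * (1 - y$k)"
proof -
  note sf = simplex_facts[OF assms]
  have "dist y (axis k 1) = norm (y - axis k 1)" by (simp add: dist_norm)
  also have "\<dots> \<le> (\<Sum>j\<in>UNIV. \<bar>(y - axis k 1)$j\<bar>)" by (rule norm_le_l1_cart)
  also have "\<dots> = (\<Sum>j\<in>UNIV. \<bar>y$j - (if j = k then 1 else 0)\<bar>)" by (simp add: axis_def)
  also have "\<dots> = (\<Sum>j\<in>UNIV. y$j + (if j = k then 1 - 2 * y$k else 0))"
  proof (rule sum.cong)
    fix j show "\<bar>y$j - (if j = k then 1 else 0)\<bar> = y$j + (if j = k then 1 - 2 * y$k else 0)"
      using sf(1)[of j] sf(5)[of k] by (cases "j = k") auto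
  qed simp
  also have "\<dots> = 2 * (1 - y$k)"
    using sf(2) by (simp add: sum.distrib sum.delta)
  finally show ?thesis .
qed

lemma V_range: "y \<in> open_simplex \<Longrightarrow> 0 \<le> 1 - y$k \<and> 1 - y$k \<le> 1"
  using simplex_facts(1,5)[of y k] by (auto intro: less_imp_le)

lemma Ff_bounds:
  assumes "0 < a" "a < b" "y \<in> open_simplex"
  shows "0 \<le> Ff a b k y" "Ff a b k y \<le> 1 - y$k" "Ff a b k y \<le> 1"
proof -
  have V: "0 \<le> 1 - y$k" "1 - y$k \<le> 1" using V_range[OF assms(3)] by auto
  show "0 \<le> Ff a b k y"
  proof (cases "1 - y$k \<le> a")
    case True then show ?thesis using hc_low[OF assms(2) True] V by (simp add: Ff_def)
  next
    case False then show ?thesis using hc_ge[OF assms(2), of "1 - y$k"] assms(1) by (simp add: Ff_def)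
  qed
  show "Ff a b k y \<le> 1 - y$k" using hc_le[OF assms(2)] by (simp add: Ff_def)
  then show "Ff a b k y \<le> 1" using V by simp
qed

lemma Ff_cont: "continuous_on UNIV (Ff a b k)"
  unfolding Ff_def[abs_def]
  by (rule continuous_on_compose2[OF hc_cont[of UNIV]]) (auto intro!: continuous_intros)

lemma Lf_eq: "rep_gen A \<sigma> (Gf a b k) (Hf a b k) =
   (\<lambda>y. - hc1 a b (1 - y$k) * dk A \<sigma> k y + 1/2 * Gam \<sigma> k y * hc2 a b (1 - y$k))"
  by (rule ext) (rule rep_gen_Ff)

lemma Lf_nonpos:
  assumes "0 < a" "a < b" "b \<le> \<beta>" "y \<in> open_simplex"
    and drift: "\<forall>y\<in>open_simplex. 1 - y$k < \<beta> \<longrightarrow> dk A \<sigma> k y \<ge> c * (1 - y$k)" and c: "c > 0"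
  shows "rep_gen A \<sigma> (Gf a b k) (Hf a b k) y \<le> 0"
proof (cases "1 - y$k < b")
  case True
  have "dk A \<sigma> k y \<ge> c * (1 - y$k)" using drift assms(3,4) True by auto
  moreover have "c * (1 - y$k) \<ge> 0" using c V_range[OF assms(4)] by simp
  ultimately have "hc1 a b (1 - y$k) * dk A \<sigma> k y \<ge> 0"
    using hc1_bounds(1)[OF assms(2)] by simp
  moreover have "Gam \<sigma> k y * hc2 a b (1 - y$k) \<le> 0"
    by (rule mult_nonneg_nonpos[OF Gam_nonneg hc2_nonpos[OF assms(2)]])
  ultimately show ?thesis by (simp add: rep_gen_Ff)
next
  case False
  then show ?thesis using hc_high[OF assms(2), of "1 - y$k"] by (simp add: rep_gen_Ff)
qed

lemma Lf_strong:
  assumes "0 < a" "a < b" "a < \<beta>" "y \<in> open_simplex" "1 - y$k \<le> a"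
    and drift: "\<forall>y\<in>open_simplex. 1 - y$k < \<beta> \<longrightarrow> dk A \<sigma> k y \<ge> c * (1 - y$k)"
  shows "rep_gen A \<sigma> (Gf a b k) (Hf a b k) y \<le> - c * (1 - y$k)"
proof -
  have "dk A \<sigma> k y \<ge> c * (1 - y$k)" using drift assms(3,4,5) by auto
  then show ?thesis using hc_low[OF assms(2,5)] by (simp add: rep_gen_Ff)
qed

lemma (in rsol) good_Ff:
  assumes "0 < a" "a < b" "b \<le> \<beta>"
    and drift: "\<forall>y\<in>open_simplex. 1 - y$k < \<beta> \<longrightarrow> dk A \<sigma> k y \<ge> c * (1 - y$k)" and c: "c > 0"
  shows "good (Ff a b k) (Gf a b k) (Hf a b k)"
  unfolding good_def
proof (intro conjI ballI)
  show "C2_with (Ff a b k) (Gf a b k) (Hf a b k)" by (rule C2_Ff)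
  show "continuous_on UNIV (Ff a b k)" by (rule Ff_cont)
  show "continuous_on UNIV (rep_gen A \<sigma> (Gf a b k) (Hf a b k))" unfolding Lf_eq by (rule Lf_cont)
  fix y :: "real^'n" assume y: "y \<in> open_simplex"
  show "0 \<le> Ff a b k y" "Ff a b k y \<le> 1" using Ff_bounds[OF assms(1,2) y] by auto
  show "rep_gen A \<sigma> (Gf a b k) (Hf a b k) y \<le> 0" by (rule Lf_nonpos[OF assms(1-3) y drift c])
qed


lemma geom_sum: "(\<Sum>m\<le>n. (e::real) / 2^(m+2)) \<le> e / 2" if "e \<ge> 0"
proof -
  have "(\<Sum>m\<le>n. (1/2::real)^m) = 2 - (1/2)^n"
    by (induction n) (auto simp: power_one_over field_simps)
  moreover have "(\<Sum>m\<le>n. e / 2^(m+2)) = (e/4) * (\<Sum>m\<le>n. (1/2::real)^m)"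
    by (simp add: sum_distrib_left power_one_over power_add field_simps)
  ultimately have "(\<Sum>m\<le>n. e / 2^(m+2)) = (e/4) * (2 - (1/2)^n)" by simp
  also have "\<dots> \<le> (e/4) * 2" using that by (intro mult_left_mono) auto
  finally show ?thesis by simp
qed

context rsol begin

lemma Bint_bound:
  assumes gd: "good f g H" and K: "K > 0" and T0: "T \<ge> 0"
  shows "measure M {\<omega>\<in>space M. - integral {0..T} (\<lambda>r. rep_gen A \<sigma> g H (X r \<omega>)) \<ge> K} \<le> 1 / K"
    "{\<omega>\<in>space M. - integral {0..T} (\<lambda>r. rep_gen A \<sigma> g H (X r \<omega>)) \<ge> K} \<in> sets M"
proof -
  note gD = goodD[OF gd]
  define u where "u \<omega> = - integral {0..T} (\<lambda>r. rep_gen A \<sigma> g H (X r \<omega>))" for \<omega>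
  have iI: "integrable M (\<lambda>\<omega>. integral {0..T} (\<lambda>r. rep_gen A \<sigma> g H (X r \<omega>)))"
    by (rule EI(1)[OF gD(1,2,7) T0])
  have iu: "integrable M u" unfolding u_def using iI by simp
  have u0: "u \<omega> \<ge> 0" if "\<omega> \<in> space M" for \<omega>
  proof -
    have "integral {0..T} (\<lambda>r. rep_gen A \<sigma> g H (X r \<omega>)) \<le> integral {0..0} (\<lambda>r. rep_gen A \<sigma> g H (X r \<omega>))"
      by (rule I_mono[OF gD(3,6) that order_refl T0])
    then show ?thesis by (simp add: u_def)
  qed
  have Eu: "(\<integral>\<omega>. u \<omega> \<partial>M) \<le> 1"
  proof -
    have "(\<integral>\<omega>. u \<omega> \<partial>M) = - ((\<integral>\<omega>. f (X T \<omega>) \<partial>M) - f x)"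
      unfolding u_def using EI(2)[OF gD(1,2,7) T0] by simp
    moreover have "(\<integral>\<omega>. f (X T \<omega>) \<partial>M) \<ge> 0"
      using gD(4) Xsimp T0 by (intro Bochner_Integration.integral_nonneg) auto
    moreover have "f x \<le> 1"
    proof -
      obtain \<omega> where "\<omega> \<in> space M" using not_empty by blast
      then have "x \<in> open_simplex" using Xsimp[of \<omega> 0] X0 by simp
      then show ?thesis using gD(5) by simp
    qed
    ultimately show ?thesis by simp
  qed
  have "measure M {\<omega>\<in>space M. u \<omega> \<ge> K} \<le> (\<integral>\<omega>. u \<omega> \<partial>M) / K"
    by (rule integral_Markov_inequality_measure[OF iu sets.top]) (use u0 K in auto)
  also have "\<dots> \<le> 1 / K" using Eu K by (simp add: divide_right_mono)
  finally show "measure M {\<omega>\<in>space M. - integral {0..T} (\<lambda>r. rep_gen A \<sigma> g H (X r \<omega>)) \<ge> K} \<le> 1 / K"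
    by (simp add: u_def)
  have "u \<in> borel_measurable M" using iu by auto
  then have "{\<omega>\<in>space M. u \<omega> \<ge> K} \<in> sets M" by measurable
  then show "{\<omega>\<in>space M. - integral {0..T} (\<lambda>r. rep_gen A \<sigma> g H (X r \<omega>)) \<ge> K} \<in> sets M"
    by (simp add: u_def)
qed

end


context rsol begin

lemma final:
  fixes k :: 'n and \<beta> c a b r \<epsilon> :: real and U :: "(real^'n) set"
  assumes drift: "\<forall>y\<in>open_simplex. 1 - y$k < \<beta> \<longrightarrow> dk A \<sigma> k y \<ge> c * (1 - y$k)" and c: "c > 0"
    and ab: "0 < a" "a < b" "b \<le> \<beta>"
    and U: "open U" "ball (axis k 1) r \<subseteq> U" "a \<le> r/2"
    and eps: "0 < \<epsilon>" "\<epsilon> < 1"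
    and xs: "x \<in> open_simplex" "1 - x$k \<le> \<epsilon> * a / 4"
  shows "measure M {\<omega>\<in>space M. (\<forall>t\<ge>0. X t \<omega> \<in> U) \<and> ((\<lambda>t. X t \<omega>) \<longlongrightarrow> axis k 1) at_top} \<ge> 1 - \<epsilon>"
proof -
  define p :: "real^'n" where "p = axis k 1"
  define f where "f = Ff a b k"
  define L where "L = rep_gen A \<sigma> (Gf a b k) (Hf a b k)"
  have \<beta>: "\<beta> > 0" using ab by linarith
  have gd: "good f (Gf a b k) (Hf a b k)" unfolding f_def by (rule good_Ff[OF ab drift c])
  have Vc: "continuous_on UNIV (\<lambda>y::real^'n. 1 - y$k)" by (intro continuous_intros)
  define eta where "eta m = min (1 / (real m + 1)) \<beta>" for m :: nat
  define th where "th m = eta m * \<epsilon> / 2^(m+4)" for m :: nat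
  define T where "T m = 2^(m+3) / (c * th m * \<epsilon>)" for m :: nat
  define fe where "fe m = Ff (eta m / 2) (eta m) k" for m :: nat
  have eta: "eta m > 0" "eta m \<le> \<beta>" "eta m \<le> 1 / (real m + 1)" for m
    using \<beta> by (auto simp: eta_def)
  have th: "th m > 0" "th m \<le> eta m / 2" for m
  proof -
    have p: "(2::real)^(m+4) = 16 * 2^m" by (simp add: power_add)
    have p1: "(1::real) \<le> 2^m" by simp
    have pp: "(0::real) < 2^(m+4)" by simp
    show "th m > 0" using eta(1)[of m] eps pp unfolding th_def by (intro divide_pos_pos mult_pos_pos) auto
    have p8: "(8::real) \<le> 8 * 2^m" using p1 by simp
    have p2: "(2::real)^(m+4) / 2 = 8 * 2^m" by (simp add: p)
    have "\<epsilon> \<le> 8 * 2^m" using p8 eps by linarith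
    then have "\<epsilon> \<le> 2^(m+4) / 2" using p2 by simp
    then have q: "\<epsilon> / 2^(m+4) \<le> 1/2" using pp by (simp add: divide_le_eq)
    have "th m = eta m * (\<epsilon> / 2^(m+4))" by (simp add: th_def)
    also have "\<dots> \<le> eta m * (1/2)" using q eta(1)[of m] by (intro mult_left_mono) auto
    finally show "th m \<le> eta m / 2" by simp
  qed
  have Tpos: "T m > 0" for m
    using c th(1)[of m] eps unfolding T_def by (intro divide_pos_pos mult_pos_pos) auto
  have cthT: "c * th m * T m = 2^(m+3) / \<epsilon>" for m
  proof -
    have "c * th m \<noteq> 0" using c th(1)[of m] by simp
    then show ?thesis using eps unfolding T_def by (simp add: field_simps)
  qed
  have gde: "good (fe m) (Gf (eta m / 2) (eta m) k) (Hf (eta m / 2) (eta m) k)" for m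
    unfolding fe_def using eta[of m] by (intro good_Ff[OF _ _ _ drift c]) auto

  define Bstay where "Bstay = (\<Union>l. Dst f (a/2) l)"
  define Bcr where "Bcr m = (\<Union>l. Cr (fe m) (th m) (eta m / 2) l)" for m
  define Bint where "Bint m = {\<omega>\<in>space M. - integral {0..T m} (\<lambda>r. L (X r \<omega>)) \<ge> c * th m * T m}" for m
  define Bm where "Bm m = Bcr m \<union> Bint m" for m
  define BB where "BB = (\<Union>m. Bm m)"

  have fx: "f x \<le> 1 - x$k" unfolding f_def by (rule Ff_bounds(2)[OF ab(1,2) xs(1)])
  have Bstay_s: "Bstay \<in> sets M" unfolding Bstay_def using Dst_sets[OF Ff_cont] f_def by auto
  have Bstay_m: "measure M Bstay \<le> \<epsilon> / 2"
  proof -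
    have "measure M Bstay \<le> f x / (a/2)" unfolding Bstay_def by (rule stay_bound[OF gd]) (use ab in simp)
    also have "\<dots> \<le> (\<epsilon> * a / 4) / (a/2)" using fx xs(2) ab by (intro divide_right_mono) auto
    also have "\<dots> = \<epsilon> / 2" using ab by (simp add: field_simps)
    finally show ?thesis .
  qed
  have Bcr_s: "Bcr m \<in> sets M" for m unfolding Bcr_def using Cr_sets[OF Ff_cont] fe_def by auto
  have Bcr_m: "measure M (Bcr m) \<le> \<epsilon> / 2^(m+3)" for m
  proof -
    have "measure M (Bcr m) \<le> th m / (eta m / 2)" unfolding Bcr_def by (rule cross_bound[OF gde th])
    also have "\<dots> = \<epsilon> / 2^(m+3)" using eta(1)[of m] by (simp add: th_def field_simps power_add)
    finally show ?thesis .
  qed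
  have Kpos: "c * th m * T m > 0" for m using c th(1) Tpos by simp
  have Bint_s: "Bint m \<in> sets M" for m
    unfolding Bint_def L_def by (rule Bint_bound(2)[OF gd Kpos less_imp_le[OF Tpos]])
  have Bint_m: "measure M (Bint m) \<le> \<epsilon> / 2^(m+3)" for m
  proof -
    have "measure M (Bint m) \<le> 1 / (c * th m * T m)"
      unfolding Bint_def L_def by (rule Bint_bound(1)[OF gd Kpos less_imp_le[OF Tpos]])
    also have "\<dots> = \<epsilon> / 2^(m+3)" unfolding cthT by simp
    finally show ?thesis .
  qed
  have Bm_s: "Bm m \<in> sets M" for m using Bcr_s Bint_s by (simp add: Bm_def)
  have Bm_m: "measure M (Bm m) \<le> \<epsilon> / 2^(m+2)" for m
  proof -
    have "measure M (Bm m) \<le> measure M (Bcr m) + measure M (Bint m)"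
      unfolding Bm_def by (rule measure_Un_le[OF Bcr_s Bint_s])
    also have "\<dots> \<le> \<epsilon> / 2^(m+3) + \<epsilon> / 2^(m+3)" using Bcr_m Bint_m by (rule add_mono)
    also have "\<dots> = \<epsilon> / 2^(m+2)" by (simp add: field_simps power_add)
    finally show ?thesis .
  qed
  have BB_s: "BB \<in> sets M" unfolding BB_def using Bm_s by auto
  have BB_m: "measure M BB \<le> \<epsilon> / 2"
  proof -
    define D where "D n = (\<Union>m\<le>n. Bm m)" for n
    have "(\<Union>n. D n) = BB" unfolding D_def BB_def by auto
    moreover have "measure M (\<Union>n. D n) \<le> \<epsilon> / 2"
    proof (rule union_bound)
      show "range D \<subseteq> sets M" unfolding D_def using Bm_s by auto
      show "incseq D" unfolding D_def by (rule incseq_SucI) (auto intro: le_SucI)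
      fix n
      have "measure M (D n) \<le> (\<Sum>m\<le>n. measure M (Bm m))" unfolding D_def
        by (rule measure_UNION_le) (use Bm_s in auto)
      also have "\<dots> \<le> (\<Sum>m\<le>n. \<epsilon> / 2^(m+2))" by (rule sum_mono) (rule Bm_m)
      also have "\<dots> \<le> \<epsilon> / 2" by (rule geom_sum) (use eps in simp)
      finally show "measure M (D n) \<le> \<epsilon> / 2" .
    qed
    ultimately show ?thesis by simp
  qed

  define S where "S = {\<omega>\<in>space M. (\<forall>t\<ge>0. X t \<omega> \<in> U) \<and> ((\<lambda>t. X t \<omega>) \<longlongrightarrow> axis k 1) at_top}"
  have S_s: "S \<in> sets M" unfolding S_def by (rule target_sets[OF U(1)])
  have sub: "space M - (Bstay \<union> BB) \<subseteq> S"
  proof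
    fix \<omega> assume "\<omega> \<in> space M - (Bstay \<union> BB)"
    then have \<omega>: "\<omega> \<in> space M" and nst: "\<omega> \<notin> Bstay" and nBB: "\<omega> \<notin> BB" by auto
    have fsmall: "f (X t \<omega>) \<le> a/2" if t: "t \<ge> 0" for t
    proof (rule ccontr)
      assume "\<not> ?thesis"
      then have "f (X t \<omega>) > a/2" by simp
      then have "\<omega> \<in> Bstay" unfolding Bstay_def f_def by (rule stay_path[OF Ff_cont \<omega> t])
      then show False using nst by simp
    qed
    have Vsmall: "1 - X t \<omega> $ k \<le> a/2" if t: "t \<ge> 0" for t
    proof (cases "1 - X t \<omega> $ k \<le> a")
      case True
      then show ?thesis using fsmall[OF t] hc_low(1)[OF ab(2) True] by (simp add: f_def Ff_def)
    next
      case False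
      then have "a \<le> hc a b (1 - X t \<omega> $ k)" using hc_ge[OF ab(2)] by simp
      then show ?thesis using fsmall[OF t] ab(1) by (simp add: f_def Ff_def)
    qed
    have inU: "X t \<omega> \<in> U" if t: "t \<ge> 0" for t
    proof -
      have "dist (X t \<omega>) (axis k 1) \<le> 2 * (1 - X t \<omega> $ k)" by (rule dist_simplex[OF Xsimp[OF \<omega> t]])
      also have "\<dots> \<le> a" using Vsmall[OF t] by simp
      also have "\<dots> < r" using U(3) ab(1) by simp
      finally have "X t \<omega> \<in> ball (axis k 1) r" by (simp add: dist_commute)
      then show ?thesis using U(2) by auto
    qed
    have ev: "\<exists>T0. \<forall>t\<ge>T0. 1 - X t \<omega> $ k \<le> 1 / (real m + 1)" for m
    proof (rule ccontr)
      assume "\<not> ?thesis"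
      then have H: "\<forall>T0. \<exists>t\<ge>T0. 1 - X t \<omega> $ k > 1 / (real m + 1)" by (auto simp: not_le)
      have nBint: "\<omega> \<notin> Bint m" and nBcr: "\<omega> \<notin> Bcr m" using nBB by (auto simp: BB_def Bm_def)
      have "\<exists>r\<in>{0..T m}. 1 - X r \<omega> $ k < th m"
      proof (rule ccontr)
        assume "\<not> ?thesis"
        then have big: "\<forall>r\<in>{0..T m}. 1 - X r \<omega> $ k \<ge> th m" by (auto simp: not_less)
        have "integral {0..T m} (\<lambda>r. L (X r \<omega>)) \<le> integral {0..T m} (\<lambda>r. - c * th m)"
        proof (rule integral_le)
          show "(\<lambda>r. L (X r \<omega>)) integrable_on {0..T m}"
            unfolding L_def by (rule path_int[OF goodD(3)[OF gd] \<omega>])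
          show "(\<lambda>r. - c * th m) integrable_on {0..T m}" by (intro integrable_continuous_interval continuous_intros)
          fix r assume r: "r \<in> {0..T m}"
          then have r0: "r \<ge> 0" by simp
          have "L (X r \<omega>) \<le> - c * (1 - X r \<omega> $ k)"
            unfolding L_def using Vsmall[OF r0] ab
            by (intro Lf_strong[OF ab(1,2) _ Xsimp[OF \<omega> r0] _ drift]) auto
          also have "\<dots> \<le> - c * th m" using big r c by simp
          finally show "L (X r \<omega>) \<le> - c * th m" .
        qed
        also have "\<dots> = - (c * th m * T m)" using Tpos[of m] by simp
        finally have "- integral {0..T m} (\<lambda>r. L (X r \<omega>)) \<ge> c * th m * T m" by simp
        then have "\<omega> \<in> Bint m" unfolding Bint_def using \<omega> by simp
        then show False using nBint by simp
      qed
      then obtain r where r: "0 \<le> r" "r \<le> T m" "1 - X r \<omega> $ k < th m" by auto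
      obtain t where t: "t \<ge> T m" "1 - X t \<omega> $ k > 1 / (real m + 1)" using H by blast
      have r1: "fe m (X r \<omega>) < th m"
        using Ff_bounds(2)[of "eta m / 2" "eta m" "X r \<omega>" k] eta(1)[of m] Xsimp[OF \<omega> r(1)] r(3)
        by (simp add: fe_def)
      have t1: "1 - X t \<omega> $ k > eta m" using t(2) eta(3)[of m] by linarith
      have imp: "fe m y \<ge> eta m / 2" if "y \<in> open_simplex" "1 - y $ k > eta m" for y
        using hc_ge[of "eta m / 2" "eta m" "1 - y$k"] eta(1)[of m] that(2) by (simp add: fe_def Ff_def)
      have "\<omega> \<in> (\<Union>l. Cr (fe m) (th m) (eta m / 2) l)"
        by (rule cross_path[OF Ff_cont[of "eta m / 2" "eta m" k, folded fe_def] Vc \<omega> r(1) order_trans[OF r(2) t(1)] r1 t1 imp])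
      then show False using nBcr by (simp add: Bcr_def)
    qed
    have conv: "((\<lambda>t. X t \<omega>) \<longlongrightarrow> axis k 1) at_top"
      unfolding tendsto_iff
    proof (intro allI impI)
      fix e :: real assume e: "e > 0"
      obtain m :: nat where m: "1 / (real m + 1) < e / 2"
      proof -
        have "e/2 > 0" using e by simp
        then obtain m where "inverse (real (Suc m)) < e/2" using reals_Archimedean by blast
        then show ?thesis using that[of m] by (simp add: inverse_eq_divide add.commute)
      qed
      obtain T0 where T0: "\<forall>t\<ge>T0. 1 - X t \<omega> $ k \<le> 1 / (real m + 1)" using ev by blast
      show "eventually (\<lambda>t. dist (X t \<omega>) (axis k 1) < e) at_top"
        unfolding eventually_at_top_linorder
      proof (intro exI[of _ "max T0 0"] allI impI)
        fix t assume t: "t \<ge> max T0 0"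
        have "dist (X t \<omega>) (axis k 1) \<le> 2 * (1 - X t \<omega> $ k)" using t by (intro dist_simplex Xsimp[OF \<omega>]) auto
        also have "\<dots> \<le> 2 / (real m + 1)" using T0 t by auto
        also have "\<dots> < e" using m by simp
        finally show "dist (X t \<omega>) (axis k 1) < e" .
      qed
    qed
    show "\<omega> \<in> S" unfolding S_def using \<omega> inU conv by auto
  qed
  have "measure M (space M - (Bstay \<union> BB)) \<le> measure M S"
    using sub S_s by (rule finite_measure_mono)
  moreover have "measure M (space M - (Bstay \<union> BB)) = 1 - measure M (Bstay \<union> BB)"
    using Bstay_s BB_s by (simp add: prob_compl)
  moreover have "measure M (Bstay \<union> BB) \<le> \<epsilon>"
    using measure_Un_le[OF Bstay_s BB_s] Bstay_m BB_m by linarith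
  ultimately show ?thesis unfolding S_def by linarith
qed

end


theorem theorem4p1:
  fixes A :: "real^'n^'n" and \<sigma> :: "real^'n" and k :: 'n
  assumes "CARD('n) \<ge> 2"
    and "\<forall>j. \<sigma>$j > 0"
    and "strict_nash A (axis k 1)"
    and "\<forall>j. j \<noteq> k \<longrightarrow> A$k$k > A$j$k + (\<sigma>$k)^2"
  shows "\<forall>U. open U \<and> axis k 1 \<in> U \<longrightarrow> (\<forall>\<epsilon>>0. \<exists>V. open V \<and> axis k 1 \<in> V \<and>
           (\<forall>x \<in> V \<inter> open_simplex. \<forall>(M :: 'w measure) X. replicator_solution A \<sigma> x M X \<longrightarrow>
              measure M {\<omega>\<in>space M. (\<forall>t\<ge>0. X t \<omega> \<in> U) \<and>
                                   ((\<lambda>t. X t \<omega>) \<longlongrightarrow> axis k 1) at_top} \<ge> 1 - \<epsilon>))"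
proof (intro allI impI)
  fix U :: "(real^'n) set" and \<epsilon> :: real
  assume U: "open U \<and> axis k 1 \<in> U" and eps: "\<epsilon> > 0"
  obtain \<beta> c where bc: "\<beta> > 0" "c > 0"
    and drift: "\<forall>y\<in>open_simplex. 1 - y$k < \<beta> \<longrightarrow> dk A \<sigma> k y \<ge> c * (1 - y$k)"
    using drift_lb[OF assms(4)] by blast
  obtain r where r: "r > 0" "ball (axis k 1) r \<subseteq> U" using U open_contains_ball by blast
  define b where "b = min \<beta> (r/2)"
  define a where "a = b / 2"
  define e where "e = min \<epsilon> (1/2)"
  have ab: "0 < a" "a < b" "b \<le> \<beta>" "a \<le> r/2" using bc r by (auto simp: a_def b_def)
  have e: "0 < e" "e < 1" "e \<le> \<epsilon>" using eps by (auto simp: e_def)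
  show "\<exists>V. open V \<and> axis k 1 \<in> V \<and>
           (\<forall>x \<in> V \<inter> open_simplex. \<forall>(M :: 'w measure) X. replicator_solution A \<sigma> x M X \<longrightarrow>
              measure M {\<omega>\<in>space M. (\<forall>t\<ge>0. X t \<omega> \<in> U) \<and>
                                   ((\<lambda>t. X t \<omega>) \<longlongrightarrow> axis k 1) at_top} \<ge> 1 - \<epsilon>)"
  proof (intro exI[of _ "ball (axis k 1) (e * a / 4)"] conjI ballI allI impI)
    show "open (ball (axis k 1) (e * a / 4))" by simp
    show "axis k 1 \<in> ball (axis k 1) (e * a / 4)" using e ab by simp
    fix x :: "real^'n" and M :: "'w measure" and X
    assume x: "x \<in> ball (axis k 1) (e * a / 4) \<inter> open_simplex" and sol: "replicator_solution A \<sigma> x M X"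
    interpret rsol A \<sigma> x M X by (rule rsol.intro[OF sol])
    have "\<bar>(x - axis k 1) $ k\<bar> \<le> norm (x - axis k 1)" by (rule component_le_norm_cart)
    moreover have "norm (x - axis k 1) < e * a / 4" using x by (simp add: dist_norm norm_minus_commute)
    ultimately have xk: "1 - x$k \<le> e * a / 4" by (simp add: axis_def)
    have "measure M {\<omega>\<in>space M. (\<forall>t\<ge>0. X t \<omega> \<in> U) \<and> ((\<lambda>t. X t \<omega>) \<longlongrightarrow> axis k 1) at_top} \<ge> 1 - e"
      using final[OF drift bc(2) ab(1-3) _ r(2) ab(4) e(1,2) _ xk] U x by auto
    then show "measure M {\<omega>\<in>space M. (\<forall>t\<ge>0. X t \<omega> \<in> U) \<and> ((\<lambda>t. X t \<omega>) \<longlongrightarrow> axis k 1) at_top} \<ge> 1 - \<epsilon>"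
      using e(3) by linarith
  qed
qed


end
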